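(* Let $(a_1,\dots,a_k)$ be a composition, $d_k=-(a_1+\cdots+a_{k-1})$ and $d_i=(a_1+\cdots+a_{i-1})-(a_{i+1}+\cdots+a_k)$ for $1\le i\le k-1$. For every $1\le i\le k$ with $d_i\neq0$, the meanders $\Gamma(a_1,\dots,a_k)$ and $\Gamma(a_1,\dots,a_{i-1},a_i[|d_i|],a_{i+1},\dots,a_k)$ are equivalent.
   Context: For a composition $\underline a=(a_1,\dots,a_k)$ of $n$, let $I_i=\{a_1+\cdots+a_{i-1}+1,\dots,a_1+\cdots+a_i\}$ and let $\theta_{\underline a}$ be the involution of $\{1,\dots,n\}$ given on $I_i$ by $x\mapsto 2(a_1+\cdots+a_{i-1})+a_i-x+1$; let $\theta(x)=n+1-x$. The meander $\Gamma(\underline a)$ is the graph with vertices $1,\dots,n$ on a horizontal line, with an arc below the line joining $x$ and $\theta_{\underline a}(x)$ whenever $x\ne\theta_{\underline a}(x)$, and an arc above joining $x$ and $\theta(x)$ whenever $x\neq\theta(x)$. Its connected components are the orbits of the group generated by $\theta_{\underline a},\theta$. A component is a cycle if every vertex $x$ in it satisfies $x\ne\theta_{\underline a}(x)$ and $x\ne\theta(x)$, and a segment otherwise. For a cycle $X$ there are an integer $s>1$ (the dimension of $X$) and $x_1,\dots,x_m$ such that the vertices of $X$ are $x_1<x_1+s-1<x_2<x_2+s-1<\cdots<x_m<x_m+s-1$; if $s>2$, a component $Y\neq X$ is said to be inside $X$ if it has a vertex $y$ with $x_j\le y\le x_j+s-1$ for some $j$. A cycle is maximal if it is not inside another cycle;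 a segment not inside any cycle is regarded as a maximal cycle of dimension $1$. Two meanders are equivalent if there is a bijection between their sets of connected components preserving the number of maximal cycles and their dimensions. $r[s]$ is the remainder of the Euclidean division of $r$ by $s$; zero entries in a tuple are deleted. *)

theory Defs
  imports Main
begin

(* Blocks are 0-indexed here: block i (i < k) is I_{i+1} = {p i + 1 .. p i + a!i}
   with p i = a_1 + ... + a_i (0-indexed prefix sum). *)

definition is_composition :: "nat list \<Rightarrow> bool" where
  "is_composition a \<longleftrightarrow> a \<noteq> [] \<and> (\<forall>x\<in>set a. 0 < x)"

definition pre :: "nat list \<Rightarrow> nat \<Rightarrow> nat" where
  "pre a i = sum_list (take i a)"

definition theta_a :: "nat list \<Rightarrow> nat \<Rightarrow> nat" where
  "theta_a a x =
     (if \<exists>i<length a. pre a i < x \<and> x \<le> pre a i + a!i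
      then (let i = (THE i. i < length a \<and> pre a i < x \<and> x \<le> pre a i + a!i)
            in 2 * pre a i + a!i + 1 - x)
      else x)"

definition theta :: "nat \<Rightarrow> nat \<Rightarrow> nat" where
  "theta n x = n + 1 - x"

definition medges :: "nat list \<Rightarrow> (nat \<times> nat) set" where
  "medges a = {(x, y). x \<in> {1..sum_list a} \<and>
                  (y = theta_a a x \<or> y = theta (sum_list a) x)}"

definition mcomp :: "nat list \<Rightarrow> nat \<Rightarrow> nat set" where
  "mcomp a x = {y. (x, y) \<in> (medges a)\<^sup>*}"

definition mcomponents :: "nat list \<Rightarrow> nat set set" where
  "mcomponents a = mcomp a ` {1..sum_list a}"

definition is_cycle :: "nat list \<Rightarrow> nat set \<Rightarrow> bool" where
  "is_cycle a X \<longleftrightarrow> X \<in> mcomponents a \<and>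
     (\<forall>x\<in>X. x \<noteq> theta_a a x \<and> x \<noteq> theta (sum_list a) x)"

definition is_segment :: "nat list \<Rightarrow> nat set \<Rightarrow> bool" where
  "is_segment a X \<longleftrightarrow> X \<in> mcomponents a \<and> \<not> is_cycle a X"

definition cycle_shape :: "nat set \<Rightarrow> nat \<Rightarrow> nat list \<Rightarrow> bool" where
  "cycle_shape X s xs \<longleftrightarrow> 1 < s \<and>
     sorted_wrt (<) (concat (map (\<lambda>x. [x, x + s - 1]) xs)) \<and>
     X = set (concat (map (\<lambda>x. [x, x + s - 1]) xs))"

definition cycle_dim :: "nat set \<Rightarrow> nat" where
  "cycle_dim X = (THE s. \<exists>xs. cycle_shape X s xs)"

definition inside :: "nat list \<Rightarrow> nat set \<Rightarrow> nat set \<Rightarrow> bool" where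
  "inside a Y X \<longleftrightarrow> is_cycle a X \<and> Y \<in> mcomponents a \<and> Y \<noteq> X \<and>
     (\<exists>s xs. cycle_shape X s xs \<and> 2 < s \<and>
        (\<exists>y\<in>Y. \<exists>x\<in>set xs. x \<le> y \<and> y \<le> x + s - 1))"

definition is_maximal_cycle :: "nat list \<Rightarrow> nat set \<Rightarrow> bool" where
  "is_maximal_cycle a X \<longleftrightarrow> is_cycle a X \<and> \<not> (\<exists>Z. inside a X Z)"

(* dimension of a component as a maximal cycle: a maximal cycle has its dimension,
   a segment not inside any cycle counts as a maximal cycle of dimension 1,
   all other components are not maximal cycles (None). *)
definition max_dim :: "nat list \<Rightarrow> nat set \<Rightarrow> nat option" where
  "max_dim a X =
     (if is_maximal_cycle a X then Some (cycle_dim X)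
      else if is_segment a X \<and> \<not> (\<exists>Z. inside a X Z) then Some 1
      else None)"

definition meander_equiv :: "nat list \<Rightarrow> nat list \<Rightarrow> bool" where
  "meander_equiv a b \<longleftrightarrow>
     (\<exists>f. bij_betw f (mcomponents a) (mcomponents b) \<and>
          (\<forall>X\<in>mcomponents a. max_dim b (f X) = max_dim a X))"

(* d_i for 0-indexed i < k:  d_{i+1} of the paper *)
definition dval :: "nat list \<Rightarrow> nat \<Rightarrow> int" where
  "dval a i =
     (if i = length a - 1 then - int (sum_list (take i a))
      else int (sum_list (take i a)) - int (sum_list (drop (Suc i) a)))"

(* (a_1,...,a_{i-1}, a_i[|d_i|], a_{i+1},...,a_k) with zero entries deleted *)
definition reduce_comp :: "nat list \<Rightarrow> nat \<Rightarrow> nat list" where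
  "reduce_comp a i = filter (\<lambda>x. x \<noteq> 0) (a[i := a!i mod nat \<bar>dval a i\<bar>])"

end

theory Submission
  imports Defs
begin

fun th :: "nat list \<Rightarrow> nat \<Rightarrow> nat" where
  "th [] x = x"
| "th (c # l) x = (if x = 0 then 0 else if x \<le> c then c + 1 - x else c + th l (x - c))"

lemma pre_Cons0: "pre (c # l) 0 = 0" by (simp add: pre_def)
lemma pre_ConsS: "pre (c # l) (Suc j) = c + pre l j" by (simp add: pre_def)

lemma pre_Suc: "j < length a \<Longrightarrow> pre a (Suc j) = pre a j + a ! j"
  by (simp add: pre_def take_Suc_conv_app_nth)

lemma pre_mono: "j \<le> j' \<Longrightarrow> pre a j \<le> pre a j'"
proof (induction a arbitrary: j j')
  case Nil then show ?case by (simp add: pre_def)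
next
  case (Cons c l)
  then show ?case
    by (cases j; cases j') (auto simp: pre_Cons0 pre_ConsS)
qed

definition blk :: "nat list \<Rightarrow> nat \<Rightarrow> nat \<Rightarrow> bool" where
  "blk a j x \<longleftrightarrow> j < length a \<and> pre a j < x \<and> x \<le> pre a j + a ! j"

lemma blk_unique: "blk a j x \<Longrightarrow> blk a j' x \<Longrightarrow> j = j'"
proof (rule ccontr)
  assume h: "blk a j x" "blk a j' x" "j \<noteq> j'"
  { fix u v assume "blk a u x" "blk a v x" "u < v"
    then have "pre a (Suc u) \<le> pre a v" by (intro pre_mono) simp
    with \<open>blk a u x\<close> \<open>blk a v x\<close> have False by (auto simp: blk_def pre_Suc) }
  with h show False by (metis linorder_neqE_nat)
qed

lemma theta_a_blk: "blk a j x \<Longrightarrow> theta_a a x = 2 * pre a j + a ! j + 1 - x"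
proof -
  assume b: "blk a j x"
  then have ex: "\<exists>i<length a. pre a i < x \<and> x \<le> pre a i + a!i" by (auto simp: blk_def)
  have "(THE i. i < length a \<and> pre a i < x \<and> x \<le> pre a i + a!i) = j"
    using b blk_unique unfolding blk_def by blast
  then show ?thesis using ex by (simp add: theta_a_def Let_def)
qed

lemma theta_a_noblk: "\<not> (\<exists>j. blk a j x) \<Longrightarrow> theta_a a x = x"
  by (auto simp: theta_a_def blk_def)

lemma blk_Cons0: "blk (c # l) 0 x \<longleftrightarrow> 0 < x \<and> x \<le> c"
  by (simp add: blk_def pre_Cons0)
lemma blk_ConsS: "blk (c # l) (Suc j) x \<longleftrightarrow> c < x \<and> blk l j (x - c)"
  by (auto simp: blk_def pre_ConsS)

lemma theta_a_th: "theta_a a x = th a x"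
proof (induction a arbitrary: x)
  case Nil
  then show ?case using theta_a_noblk[of "[]" x] by (simp add: blk_def)
next
  case (Cons c l)
  show ?case
  proof (cases "x = 0")
    case True
    then show ?thesis using theta_a_noblk[of "c # l" x] by (auto simp: blk_def)
  next
    case x0: False
    show ?thesis
    proof (cases "x \<le> c")
      case True
      then have "blk (c # l) 0 x" using x0 by (simp add: blk_Cons0)
      from theta_a_blk[OF this] True x0 show ?thesis by (simp add: pre_Cons0)
    next
      case False
      show ?thesis
      proof (cases "\<exists>j. blk l j (x - c)")
        case True
        then obtain j where j: "blk l j (x - c)" by blast
        then have "blk (c # l) (Suc j) x" using False by (simp add: blk_ConsS)
        from theta_a_blk[OF this] theta_a_blk[OF j] Cons.IH[of "x - c"] False x0 j
        show ?thesis by (auto simp: pre_ConsS blk_def)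
      next
        case nb: False
        have "\<not> (\<exists>j. blk (c # l) j x)"
        proof
          assume "\<exists>j. blk (c # l) j x"
          then obtain j where "blk (c # l) j x" by blast
          then show False using nb False by (cases j) (auto simp: blk_Cons0 blk_ConsS)
        qed
        from theta_a_noblk[OF this] theta_a_noblk[OF nb] Cons.IH[of "x - c"] False x0
        show ?thesis by simp
      qed
    qed
  qed
qed

lemma th_out: "x = 0 \<or> sum_list a < x \<Longrightarrow> th a x = x"
  by (induction a arbitrary: x) auto

lemma th_range: "1 \<le> x \<Longrightarrow> x \<le> sum_list a \<Longrightarrow> 1 \<le> th a x \<and> th a x \<le> sum_list a"
proof (induction a arbitrary: x)
  case Nil then show ?case by simp
next
  case (Cons c l)
  show ?case
  proof (cases "x \<le> c")
    case True then show ?thesis using Cons.prems by auto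
  next
    case False
    then have "1 \<le> x - c" "x - c \<le> sum_list l" using Cons.prems by auto
    then show ?thesis using False Cons.IH[of "x - c"] by auto
  qed
qed

lemma th_invol: "th a (th a x) = x"
proof (induction a arbitrary: x)
  case Nil then show ?case by simp
next
  case (Cons c l)
  show ?case
  proof (cases "x = 0")
    case True then show ?thesis by simp
  next
    case False
    show ?thesis
    proof (cases "x \<le> c")
      case True then show ?thesis using False by auto
    next
      case False': False
      have "th l (x - c) \<noteq> 0"
      proof (cases "x - c \<le> sum_list l")
        case True
        have "1 \<le> x - c" using False' by simp
        then show ?thesis using th_range[of "x - c" l] True by auto
      next
        case False then show ?thesis using th_out[of "x - c" l] by auto
      qed
      then show ?thesis using False False' Cons.IH[of "x - c"] by auto
    qed
  qed
qed

lemma th_append: "th (xs @ ys) x = (if x \<le> sum_list xs then th xs x else sum_list xs + th ys (x - sum_list xs))"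
proof (induction xs arbitrary: x)
  case Nil then show ?case by (simp add: th_out)
next
  case (Cons c l)
  then show ?case by auto
qed

lemma th_zero: "th (xs @ 0 # ys) = th (xs @ ys)"
  by (rule ext) (simp add: th_append)

lemma th_filter: "th (filter (\<lambda>x. x \<noteq> 0) a) = th a"
proof (induction a)
  case Nil then show ?case by simp
next
  case (Cons c l)
  then show ?case by (rule_tac ext) (auto simp: th_out)
qed


lemma theta_a_eq: "theta_a a = th a" by (rule ext) (simp add: theta_a_th)

lemma medges_iff: "(x, y) \<in> medges a \<longleftrightarrow> x \<in> {1..sum_list a} \<and> (y = th a x \<or> y = sum_list a + 1 - x)"
  by (simp add: medges_def theta_a_eq theta_def)

lemma medges_range: "(x, y) \<in> medges a \<Longrightarrow> y \<in> {1..sum_list a}"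
  using th_range[of x a] by (auto simp: medges_iff)

lemma medges_sym: "(x, y) \<in> medges a \<Longrightarrow> (y, x) \<in> medges a"
  using medges_range[of x y a] th_invol[of a x] by (auto simp: medges_iff)

lemma sym_medges: "sym (medges a)"
  by (auto intro: symI medges_sym)

lemma rt_sym: "(x, y) \<in> (medges a)\<^sup>* \<Longrightarrow> (y, x) \<in> (medges a)\<^sup>*"
  using sym_rtrancl[OF sym_medges] by (auto simp: sym_def)

lemma rt_range: "(x, y) \<in> (medges a)\<^sup>* \<Longrightarrow> x \<in> {1..sum_list a} \<Longrightarrow> y \<in> {1..sum_list a}"
  by (induction rule: rtrancl_induct) (auto dest: medges_range)

lemma edge_th: "x \<in> {1..sum_list a} \<Longrightarrow> (x, th a x) \<in> medges a"
  by (simp add: medges_iff)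
lemma edge_theta: "x \<in> {1..sum_list a} \<Longrightarrow> (x, sum_list a + 1 - x) \<in> medges a"
  by (simp add: medges_iff)

lemma mcomp_eq: "(x, y) \<in> (medges a)\<^sup>* \<Longrightarrow> mcomp a x = mcomp a y"
  unfolding mcomp_def using rt_sym by (blast intro: rtrancl_trans)

lemma mcomp_self: "x \<in> mcomp a x" by (simp add: mcomp_def)

lemma mcomp_sub: "x \<in> {1..sum_list a} \<Longrightarrow> mcomp a x \<subseteq> {1..sum_list a}"
  unfolding mcomp_def using rt_range by blast

lemma comp_elem: "X \<in> mcomponents a \<Longrightarrow> y \<in> X \<Longrightarrow> X = mcomp a y"
proof -
  assume X: "X \<in> mcomponents a" and y: "y \<in> X"
  then obtain x where "X = mcomp a x" by (auto simp: mcomponents_def)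
  with y show ?thesis using mcomp_eq by (simp add: mcomp_def)
qed

lemma comp_sub: "X \<in> mcomponents a \<Longrightarrow> X \<subseteq> {1..sum_list a}"
  unfolding mcomponents_def using mcomp_sub by blast

lemma comp_th: "X \<in> mcomponents a \<Longrightarrow> y \<in> X \<Longrightarrow> th a y \<in> X"
proof -
  assume X: "X \<in> mcomponents a" and y: "y \<in> X"
  then have "X = mcomp a y" by (rule comp_elem)
  moreover have "y \<in> {1..sum_list a}" using comp_sub[OF X] y by blast
  ultimately show ?thesis using edge_th[of y a] by (simp add: mcomp_def)
qed

lemma comp_theta: "X \<in> mcomponents a \<Longrightarrow> y \<in> X \<Longrightarrow> sum_list a + 1 - y \<in> X"
proof -
  assume X: "X \<in> mcomponents a" and y: "y \<in> X"
  then have "X = mcomp a y" by (rule comp_elem)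
  moreover have "y \<in> {1..sum_list a}" using comp_sub[OF X] y by blast
  ultimately show ?thesis using edge_theta[of y a] by (simp add: mcomp_def)
qed

lemma comp_finite: "X \<in> mcomponents a \<Longrightarrow> finite X"
  using comp_sub finite_subset by blast

lemma is_cycle_iff: "is_cycle a X \<longleftrightarrow> X \<in> mcomponents a \<and> (\<forall>x\<in>X. x \<noteq> th a x \<and> x \<noteq> sum_list a + 1 - x)"
  by (simp add: is_cycle_def theta_a_eq theta_def)

locale transfer =
  fixes a b :: "nat list" and g h :: "nat \<Rightarrow> nat"
  assumes g_range: "x \<in> {1..sum_list a} \<Longrightarrow> g x \<in> {1..sum_list b}"
    and h_range: "y \<in> {1..sum_list b} \<Longrightarrow> h y \<in> {1..sum_list a}"
    and g_th: "x \<in> {1..sum_list a} \<Longrightarrow> (g x, g (th a x)) \<in> (medges b)\<^sup>*"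
    and g_theta: "x \<in> {1..sum_list a} \<Longrightarrow> (g x, g (sum_list a + 1 - x)) \<in> (medges b)\<^sup>*"
    and h_th: "y \<in> {1..sum_list b} \<Longrightarrow> (h y, h (th b y)) \<in> (medges a)\<^sup>*"
    and h_theta: "y \<in> {1..sum_list b} \<Longrightarrow> (h y, h (sum_list b + 1 - y)) \<in> (medges a)\<^sup>*"
    and gh: "y \<in> {1..sum_list b} \<Longrightarrow> g (h y) = y"
    and hg: "x \<in> {1..sum_list a} \<Longrightarrow> (x, h (g x)) \<in> (medges a)\<^sup>*"
begin

lemma g_rt: "(x, y) \<in> (medges a)\<^sup>* \<Longrightarrow> x \<in> {1..sum_list a} \<Longrightarrow> (g x, g y) \<in> (medges b)\<^sup>*"
proof (induction rule: rtrancl_induct)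
  case base then show ?case by simp
next
  case (step y z)
  then have "(g y, g z) \<in> (medges b)\<^sup>*" using g_th g_theta by (auto simp: medges_iff)
  with step show ?case by (blast intro: rtrancl_trans)
qed

lemma h_rt: "(x, y) \<in> (medges b)\<^sup>* \<Longrightarrow> x \<in> {1..sum_list b} \<Longrightarrow> (h x, h y) \<in> (medges a)\<^sup>*"
proof (induction rule: rtrancl_induct)
  case base then show ?case by simp
next
  case (step y z)
  then have "(h y, h z) \<in> (medges a)\<^sup>*" using h_th h_theta by (auto simp: medges_iff)
  with step show ?case by (blast intro: rtrancl_trans)
qed

lemma img_mcomp: "x \<in> {1..sum_list a} \<Longrightarrow> g ` mcomp a x = mcomp b (g x)"
proof
  assume x: "x \<in> {1..sum_list a}"
  show "g ` mcomp a x \<subseteq> mcomp b (g x)"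
    using g_rt x by (auto simp: mcomp_def)
  show "mcomp b (g x) \<subseteq> g ` mcomp a x"
  proof
    fix z assume "z \<in> mcomp b (g x)"
    then have z: "(g x, z) \<in> (medges b)\<^sup>*" by (simp add: mcomp_def)
    have gx: "g x \<in> {1..sum_list b}" using g_range x .
    then have zr: "z \<in> {1..sum_list b}" using rt_range z by blast
    have "(h (g x), h z) \<in> (medges a)\<^sup>*" using h_rt z gx by blast
    then have "(x, h z) \<in> (medges a)\<^sup>*" using hg x by (blast intro: rtrancl_trans)
    then show "z \<in> g ` mcomp a x" using gh zr by (force simp: mcomp_def)
  qed
qed

definition F :: "nat set \<Rightarrow> nat set" where "F X = g ` X"

lemma F_comp: "X \<in> mcomponents a \<Longrightarrow> F X \<in> mcomponents b"
  using img_mcomp g_range by (auto simp: mcomponents_def F_def)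

lemma F_bij: "bij_betw F (mcomponents a) (mcomponents b)"
proof (rule bij_betw_imageI)
  show "inj_on F (mcomponents a)"
  proof (rule inj_onI)
    fix X Y assume X: "X \<in> mcomponents a" and Y: "Y \<in> mcomponents a" and e: "F X = F Y"
    obtain x where x: "x \<in> {1..sum_list a}" "X = mcomp a x" using X by (auto simp: mcomponents_def)
    obtain y where y: "y \<in> {1..sum_list a}" "Y = mcomp a y" using Y by (auto simp: mcomponents_def)
    have "mcomp b (g x) = mcomp b (g y)" using e x y img_mcomp by (simp add: F_def)
    then have "g y \<in> mcomp b (g x)" using mcomp_self[of "g y" b] by simp
    then have "(g x, g y) \<in> (medges b)\<^sup>*" by (simp add: mcomp_def)
    then have "(h (g x), h (g y)) \<in> (medges a)\<^sup>*" using h_rt g_range x by blast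
    then have "(x, y) \<in> (medges a)\<^sup>*" using hg x y rt_sym by (blast intro: rtrancl_trans)
    then show "X = Y" using x y mcomp_eq by simp
  qed
  show "F ` mcomponents a = mcomponents b"
  proof
    show "F ` mcomponents a \<subseteq> mcomponents b" using F_comp by blast
    show "mcomponents b \<subseteq> F ` mcomponents a"
    proof
      fix Z assume "Z \<in> mcomponents b"
      then obtain z where z: "z \<in> {1..sum_list b}" "Z = mcomp b z" by (auto simp: mcomponents_def)
      then have "Z = F (mcomp a (h z))" using img_mcomp h_range gh by (simp add: F_def)
      moreover have "mcomp a (h z) \<in> mcomponents a" using h_range z by (auto simp: mcomponents_def)
      ultimately show "Z \<in> F ` mcomponents a" by blast
    qed
  qed
qed

end

lemma equiv_crit:
  assumes bij: "bij_betw F (mcomponents a) (mcomponents b)"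
    and cyc: "\<And>X. X \<in> mcomponents a \<Longrightarrow> is_cycle b (F X) \<longleftrightarrow> is_cycle a X"
    and shp: "\<And>X s. is_cycle a X \<Longrightarrow> (\<exists>xs. cycle_shape (F X) s xs) \<longleftrightarrow> (\<exists>xs. cycle_shape X s xs)"
    and ins: "\<And>X Y. X \<in> mcomponents a \<Longrightarrow> Y \<in> mcomponents a \<Longrightarrow> inside b (F Y) (F X) \<longleftrightarrow> inside a Y X"
  shows "meander_equiv a b"
  unfolding meander_equiv_def
proof (intro exI conjI ballI)
  show "bij_betw F (mcomponents a) (mcomponents b)" by (rule bij)
  fix X assume X: "X \<in> mcomponents a"
  have FX: "F X \<in> mcomponents b" using bij X by (auto simp: bij_betw_def)
  have ex: "(\<exists>Z. inside b (F X) Z) \<longleftrightarrow> (\<exists>Z. inside a X Z)"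
  proof
    assume "\<exists>Z. inside b (F X) Z"
    then obtain Z where Z: "inside b (F X) Z" by blast
    then have "Z \<in> mcomponents b" by (simp add: inside_def is_cycle_def)
    then obtain Z' where Z': "Z' \<in> mcomponents a" "Z = F Z'" using bij by (auto simp: bij_betw_def)
    then show "\<exists>Z. inside a X Z" using ins[OF Z'(1) X] Z by blast
  next
    assume "\<exists>Z. inside a X Z"
    then obtain Z where Z: "inside a X Z" by blast
    then have "Z \<in> mcomponents a" by (simp add: inside_def is_cycle_def)
    then show "\<exists>Z. inside b (F X) Z" using ins[OF _ X] Z by blast
  qed
  have dim: "is_cycle a X \<Longrightarrow> cycle_dim (F X) = cycle_dim X"
    unfolding cycle_dim_def using shp by presburger
  show "max_dim b (F X) = max_dim a X"
    unfolding max_dim_def is_maximal_cycle_def is_segment_def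
    using ex dim cyc[OF X] X FX by auto
qed


definition shp :: "nat set \<Rightarrow> nat \<Rightarrow> nat set \<Rightarrow> bool" where
  "shp X s P \<longleftrightarrow> 1 < s \<and> finite P \<and> X = P \<union> (\<lambda>p. p + s - 1) ` P \<and>
     (\<forall>p\<in>P. \<forall>q\<in>P. p < q \<longrightarrow> p + s - 1 < q)"

lemma sc_Cons: "concat (map (\<lambda>x. [x, x + s - 1]) ((x::nat) # xs)) = x # (x + s - 1) # concat (map (\<lambda>x. [x, x + s - 1]) xs)"
  by simp

lemma sorted_concat_D:
  fixes xs :: "nat list"
  shows "sorted_wrt (<) (concat (map (\<lambda>x. [x, x + s - 1]) xs)) \<Longrightarrow>
     (xs \<noteq> [] \<longrightarrow> 1 < s) \<and> sorted_wrt (<) xs \<and> (\<forall>p\<in>set xs. \<forall>q\<in>set xs. p < q \<longrightarrow> p + s - 1 < q)"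
proof (induction xs)
  case Nil then show ?case by simp
next
  case (Cons x xs)
  let ?r = "concat (map (\<lambda>x. [x, x + s - 1]) xs)"
  have h: "sorted_wrt (<) (x # (x + s - 1) # ?r)" using Cons.prems by (simp only: sc_Cons)
  then have "x < x + s - 1" by simp
  then have s1: "1 < s" by arith
  from h have r: "sorted_wrt (<) ?r" by simp
  from h have lt: "\<forall>z\<in>set ?r. x + s - 1 < z" by simp
  have sub: "set xs \<subseteq> set ?r" by auto
  have lt2: "\<forall>q\<in>set xs. x + s - 1 < q" using lt sub by blast
  then have lt3: "\<forall>q\<in>set xs. x < q" using s1 by force
  have IH: "sorted_wrt (<) xs" "\<forall>p\<in>set xs. \<forall>q\<in>set xs. p < q \<longrightarrow> p + s - 1 < q"
    using Cons.IH r by auto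
  have gap: "\<forall>p\<in>set (x # xs). \<forall>q\<in>set (x # xs). p < q \<longrightarrow> p + s - 1 < q"
  proof (intro ballI impI)
    fix p q assume p: "p \<in> set (x # xs)" and q: "q \<in> set (x # xs)" and pq: "p < q"
    show "p + s - 1 < q"
    proof (cases "p = x")
      case True
      then show ?thesis using q pq lt2 by auto
    next
      case False
      then have pxs: "p \<in> set xs" using p by simp
      then have "q \<noteq> x" using lt3 pq by force
      then have "q \<in> set xs" using q by simp
      then show ?thesis using IH(2) pxs pq by blast
    qed
  qed
  show ?case using s1 IH(1) lt3 gap by simp
qed

lemma sorted_concat_I:
  fixes xs :: "nat list"
  shows "(xs \<noteq> [] \<longrightarrow> 1 < s) \<Longrightarrow> sorted_wrt (<) xs \<Longrightarrow> (\<forall>p\<in>set xs. \<forall>q\<in>set xs. p < q \<longrightarrow> p + s - 1 < q) \<Longrightarrow>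
     sorted_wrt (<) (concat (map (\<lambda>x. [x, x + s - 1]) xs))"
proof (induction xs)
  case Nil then show ?case by simp
next
  case (Cons x xs)
  let ?r = "concat (map (\<lambda>x. [x, x + s - 1]) xs)"
  have s1: "1 < s" using Cons.prems by simp
  have lt: "\<forall>q\<in>set xs. x < q" using Cons.prems(2) by simp
  have gap: "\<forall>q\<in>set xs. x + s - 1 < q" using Cons.prems(3) lt by simp
  have r: "sorted_wrt (<) ?r" using Cons.IH Cons.prems s1 by simp
  have allr: "\<forall>z\<in>set ?r. x + s - 1 < z"
  proof
    fix z assume "z \<in> set ?r"
    then obtain q where q: "q \<in> set xs" "z = q \<or> z = q + s - 1" by auto
    then have "x + s - 1 < q" using gap by blast
    then show "x + s - 1 < z" using q(2) s1 by auto
  qed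
  have "x < x + s - 1" using s1 by arith
  then have allr2: "\<forall>z\<in>set ?r. x < z" using allr by force
  have "sorted_wrt (<) (x # (x + s - 1) # ?r)"
    using r allr allr2 \<open>x < x + s - 1\<close> by simp
  then show ?case by (simp only: sc_Cons)
qed

lemma sorted_concat_iff:
  fixes xs :: "nat list"
  shows "sorted_wrt (<) (concat (map (\<lambda>x. [x, x + s - 1]) xs)) \<longleftrightarrow>
     (xs \<noteq> [] \<longrightarrow> 1 < s) \<and> sorted_wrt (<) xs \<and> (\<forall>p\<in>set xs. \<forall>q\<in>set xs. p < q \<longrightarrow> p + s - 1 < q)"
  using sorted_concat_D sorted_concat_I by blast

lemma set_concat_pairs: "set (concat (map (\<lambda>x. [x, x + s - 1]) (xs :: nat list))) = set xs \<union> (\<lambda>p. p + s - 1) ` set xs"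
  by auto

lemma set_concat_pairs_old: "set (concat (map (\<lambda>x. [x, x + s - 1]) xs)) = set xs \<union> (\<lambda>p. p + s - 1) ` set xs"
  by auto

lemma cycle_shape_shp: "cycle_shape X s xs \<Longrightarrow> shp X s (set xs)"
proof -
  assume h: "cycle_shape X s xs"
  then have a: "1 < s" "X = set xs \<union> (\<lambda>p. p + s - 1) ` set xs"
    and "sorted_wrt (<) (concat (map (\<lambda>x. [x, x + s - 1]) xs))"
    unfolding cycle_shape_def set_concat_pairs by auto
  then have "\<forall>p\<in>set xs. \<forall>q\<in>set xs. p < q \<longrightarrow> p + s - 1 < q" using sorted_concat_D by blast
  then show ?thesis unfolding shp_def using a by simp
qed

lemma shp_cycle_shape: "shp X s P \<Longrightarrow> cycle_shape X s (sorted_list_of_set P)"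
proof -
  assume h: "shp X s P"
  then have a: "1 < s" "finite P" "X = P \<union> (\<lambda>p. p + s - 1) ` P" "\<forall>p\<in>P. \<forall>q\<in>P. p < q \<longrightarrow> p + s - 1 < q"
    by (auto simp: shp_def)
  have st: "set (sorted_list_of_set P) = P" using a(2) by (simp add: set_sorted_list_of_set)
  show ?thesis unfolding cycle_shape_def sorted_concat_iff set_concat_pairs st
    using a strict_sorted_list_of_set[of P] by simp
qed

lemma shape_ex: "(\<exists>xs. cycle_shape X s xs) \<longleftrightarrow> (\<exists>P. shp X s P)"
  using cycle_shape_shp shp_cycle_shape by blast

lemma inside_iff: "inside a Y X \<longleftrightarrow> is_cycle a X \<and> Y \<in> mcomponents a \<and> Y \<noteq> X \<and>
   (\<exists>s P. shp X s P \<and> 2 < s \<and> (\<exists>y\<in>Y. \<exists>x\<in>P. x \<le> y \<and> y \<le> x + s - 1))"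
proof -
  have "(\<exists>s xs. cycle_shape X s xs \<and> 2 < s \<and> (\<exists>y\<in>Y. \<exists>x\<in>set xs. x \<le> y \<and> y \<le> x + s - 1)) \<longleftrightarrow>
        (\<exists>s P. shp X s P \<and> 2 < s \<and> (\<exists>y\<in>Y. \<exists>x\<in>P. x \<le> y \<and> y \<le> x + s - 1))"
  proof
    assume "\<exists>s xs. cycle_shape X s xs \<and> 2 < s \<and> (\<exists>y\<in>Y. \<exists>x\<in>set xs. x \<le> y \<and> y \<le> x + s - 1)"
    then show "\<exists>s P. shp X s P \<and> 2 < s \<and> (\<exists>y\<in>Y. \<exists>x\<in>P. x \<le> y \<and> y \<le> x + s - 1)"
      using cycle_shape_shp by blast
  next
    assume "\<exists>s P. shp X s P \<and> 2 < s \<and> (\<exists>y\<in>Y. \<exists>x\<in>P. x \<le> y \<and> y \<le> x + s - 1)"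
    then obtain s P where "shp X s P" "2 < s" "\<exists>y\<in>Y. \<exists>x\<in>P. x \<le> y \<and> y \<le> x + s - 1" by blast
    moreover have "set (sorted_list_of_set P) = P" using \<open>shp X s P\<close> by (simp add: shp_def)
    ultimately show "\<exists>s xs. cycle_shape X s xs \<and> 2 < s \<and> (\<exists>y\<in>Y. \<exists>x\<in>set xs. x \<le> y \<and> y \<le> x + s - 1)"
      using shp_cycle_shape by metis
  qed
  then show ?thesis unfolding inside_def by blast
qed

lemma shp_unique: "shp X s P \<Longrightarrow> shp X s Q \<Longrightarrow> P = Q"
proof (rule ccontr)
  assume hP: "shp X s P" and hQ: "shp X s Q" and ne: "P \<noteq> Q"
  let ?D = "(P - Q) \<union> (Q - P)"
  have "?D \<noteq> {}" using ne by blast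
  define z where "z = Min ?D"
  have fin: "finite ?D" using hP hQ by (simp add: shp_def)
  have zD: "z \<in> ?D" unfolding z_def using Min_in[OF fin \<open>?D \<noteq> {}\<close>] .
  have zmin: "\<And>w. w \<in> ?D \<Longrightarrow> z \<le> w" unfolding z_def by (rule Min_le[OF fin])
  have key: "\<And>P Q. shp X s P \<Longrightarrow> shp X s Q \<Longrightarrow> z \<in> P - Q \<Longrightarrow> (\<And>w. w < z \<Longrightarrow> w \<in> P \<longleftrightarrow> w \<in> Q) \<Longrightarrow> False"
  proof -
    fix P Q assume hP: "shp X s P" and hQ: "shp X s Q" and z: "z \<in> P - Q" and lw: "\<And>w. w < z \<Longrightarrow> w \<in> P \<longleftrightarrow> w \<in> Q"
    have "z \<in> X" using hP z by (auto simp: shp_def)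
    then obtain q where q: "q \<in> Q" "z = q + s - 1" using hQ z by (auto simp: shp_def)
    have "q < z" using hQ q by (auto simp: shp_def)
    then have "q \<in> P" using lw q by blast
    then have "q + s - 1 < z" using hP z \<open>q < z\<close> by (auto simp: shp_def)
    then show False using q by simp
  qed
  have lw: "\<And>w. w < z \<Longrightarrow> w \<in> P \<longleftrightarrow> w \<in> Q"
  proof -
    fix w assume w: "w < z"
    show "w \<in> P \<longleftrightarrow> w \<in> Q"
    proof (rule ccontr)
      assume "\<not> (w \<in> P \<longleftrightarrow> w \<in> Q)"
      then have "w \<in> ?D" by blast
      then have "z \<le> w" by (rule zmin)
      then show False using w by simp
    qed
  qed
  show False
  proof (cases "z \<in> P - Q")
    case True then show False using key[OF hP hQ] lw by blast
  next
    case False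
    then have "z \<in> Q - P" using zD by blast
    then show False using key[OF hQ hP] lw by blast
  qed
qed

lemma even_invol:
  assumes "finite S" and "\<forall>x\<in>S. f x \<in> S \<and> f (f x) = x \<and> f x \<noteq> x"
  shows "even (card S)"
  using assms
proof (induction "card S" arbitrary: S rule: less_induct)
  case less
  show ?case
  proof (cases "S = {}")
    case True then show ?thesis by simp
  next
    case False
    then obtain x where x: "x \<in> S" by blast
    let ?S = "S - {x, f x}"
    have fx: "f x \<in> S" "f x \<noteq> x" using less.prems x by auto
    have sub: "{x, f x} \<subseteq> S" using x fx by blast
    have c2: "card {x, f x} = 2" using fx by simp
    have "card ?S = card S - 2" using card_Diff_subset[OF _ sub] c2 by simp
    moreover have "2 \<le> card S" using card_mono[OF less.prems(1) sub] c2 by simp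
    ultimately have c: "card S = card ?S + 2" by simp
    have inv: "\<forall>y\<in>?S. f y \<in> ?S \<and> f (f y) = y \<and> f y \<noteq> y"
    proof
      fix y assume y: "y \<in> ?S"
      have y1: "f y \<in> S" "f (f y) = y" "f y \<noteq> y" using less.prems y by auto
      have "f y \<noteq> x"
      proof
        assume "f y = x" then have "f (f y) = f x" by simp
        then show False using y y1 by simp
      qed
      moreover have "f y \<noteq> f x"
      proof
        assume "f y = f x" then have "f (f y) = f (f x)" by simp
        then show False using y y1 less.prems x by simp
      qed
      ultimately show "f y \<in> ?S \<and> f (f y) = y \<and> f y \<noteq> y" using y1 by simp
    qed
    have "even (card ?S)" using less.hyps[of ?S] c less.prems(1) inv by simp
    then show ?thesis using c by simp
  qed
qed

lemma no_straddle:
  assumes h: "shp X s P" and ev: "even (card {x\<in>X. x \<le> q})" and p: "p \<in> P" "p \<le> q"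
  shows "p + s - 1 \<le> q"
proof (rule ccontr)
  assume "\<not> p + s - 1 \<le> q"
  then have st: "q < p + s - 1" by simp
  have s1: "1 < s" and fin: "finite P" and X: "X = P \<union> (\<lambda>p. p + s - 1) ` P"
    and gap: "\<forall>p\<in>P. \<forall>q\<in>P. p < q \<longrightarrow> p + s - 1 < q" using h by (auto simp: shp_def)
  define A where "A = {p'\<in>P. p' + s - 1 \<le> q}"
  have finA: "finite A" using fin by (simp add: A_def)
  have eq: "{x\<in>X. x \<le> q} = insert p (A \<union> (\<lambda>p. p + s - 1) ` A)"
  proof
    show "{x\<in>X. x \<le> q} \<subseteq> insert p (A \<union> (\<lambda>p. p + s - 1) ` A)"
    proof
      fix x assume "x \<in> {x\<in>X. x \<le> q}"
      then have xX: "x \<in> X" and xq: "x \<le> q" by auto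
      show "x \<in> insert p (A \<union> (\<lambda>p. p + s - 1) ` A)"
      proof (cases "x \<in> P")
        case True
        show ?thesis
        proof (cases "x = p")
          case False
          then have "x < p \<or> p < x" by arith
          then show ?thesis
          proof
            assume "x < p" then have "x + s - 1 < p" using gap True p by blast
            then show ?thesis using True p by (simp add: A_def)
          next
            assume "p < x" then have "p + s - 1 < x" using gap True p by blast
            then show ?thesis using xq st by simp
          qed
        qed simp
      next
        case False
        then obtain p' where p': "p' \<in> P" "x = p' + s - 1" using xX X by blast
        then have "p' \<in> A" using xq by (simp add: A_def)
        then show ?thesis using p' by blast
      qed
    qed
    show "insert p (A \<union> (\<lambda>p. p + s - 1) ` A) \<subseteq> {x\<in>X. x \<le> q}"
      using p X s1 by (auto simp: A_def)
  qed
  have d1: "A \<inter> (\<lambda>p. p + s - 1) ` A = {}"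
  proof -
    { fix x assume "x \<in> A" "x \<in> (\<lambda>p. p + s - 1) ` A"
      then obtain p' where "p' \<in> A" "x = p' + s - 1" by blast
      moreover have "p' < x" using s1 \<open>x = p' + s - 1\<close> by simp
      ultimately have False using gap \<open>x \<in> A\<close> by (auto simp: A_def) }
    then show ?thesis by blast
  qed
  have d2: "p \<notin> A \<union> (\<lambda>p. p + s - 1) ` A"
  proof
    assume "p \<in> A \<union> (\<lambda>p. p + s - 1) ` A"
    then show False
    proof
      assume "p \<in> A" then show False using st by (simp add: A_def)
    next
      assume "p \<in> (\<lambda>p. p + s - 1) ` A"
      then obtain p' where "p' \<in> A" "p = p' + s - 1" by blast
      moreover have "p' < p" using s1 \<open>p = p' + s - 1\<close> by simp
      ultimately show False using gap p by (auto simp: A_def)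
    qed
  qed
  have inj: "inj_on (\<lambda>p. p + s - 1) A" using s1 by (auto simp: inj_on_def)
  have "card {x\<in>X. x \<le> q} = Suc (card A + card A)"
    using eq d1 d2 finA inj by (simp add: card_Un_disjoint card_image)
  then show False using ev by simp
qed

lemma shp_sub: "shp X s P \<Longrightarrow> P' \<subseteq> P \<Longrightarrow> shp (P' \<union> (\<lambda>p. p + s - 1) ` P') s P'"
  unfolding shp_def by (auto intro: finite_subset)

lemma shp_union:
  assumes "shp X1 s P1" "shp X2 s P2" "\<forall>x\<in>X1. \<forall>y\<in>X2. x < y"
  shows "shp (X1 \<union> X2) s (P1 \<union> P2)"
proof -
  have a: "1 < s" "finite P1" "X1 = P1 \<union> (\<lambda>p. p + s - 1) ` P1" "\<forall>p\<in>P1. \<forall>q\<in>P1. p < q \<longrightarrow> p + s - 1 < q"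
    using assms(1) by (auto simp: shp_def)
  have b: "finite P2" "X2 = P2 \<union> (\<lambda>p. p + s - 1) ` P2" "\<forall>p\<in>P2. \<forall>q\<in>P2. p < q \<longrightarrow> p + s - 1 < q"
    using assms(2) by (auto simp: shp_def)
  have c: "\<forall>p\<in>P1. \<forall>q\<in>P2. p + s - 1 < q" using assms(3) a(3) b(2) by blast
  have d: "\<forall>p\<in>P1. \<forall>q\<in>P2. p < q" using assms(3) a(3) b(2) by blast
  have gap: "\<forall>p\<in>P1 \<union> P2. \<forall>q\<in>P1 \<union> P2. p < q \<longrightarrow> p + s - 1 < q"
  proof (intro ballI impI)
    fix p q assume p: "p \<in> P1 \<union> P2" and q: "q \<in> P1 \<union> P2" and pq: "p < q"
    show "p + s - 1 < q"
    proof (cases "p \<in> P1")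
      case True
      then show ?thesis using a(4) c q pq by blast
    next
      case False
      then have "p \<in> P2" using p by blast
      moreover have "q \<notin> P1" using d \<open>p \<in> P2\<close> pq by force
      ultimately show ?thesis using b(3) q pq by blast
    qed
  qed
  have X: "X1 \<union> X2 = (P1 \<union> P2) \<union> (\<lambda>p. p + s - 1) ` (P1 \<union> P2)"
    using a(3) b(2) by (auto simp: image_Un)
  show ?thesis unfolding shp_def using a(1,2) b(1) X gap by simp
qed

lemma shp_map:
  assumes h: "shp X s P" and sh: "\<And>p. p \<in> P \<Longrightarrow> f (p + s - 1) = f p + s - 1"
    and mono: "\<And>x y. x \<in> X \<Longrightarrow> y \<in> X \<Longrightarrow> x < y \<Longrightarrow> f x < f y"
  shows "shp (f ` X) s (f ` P)"
proof -
  have a: "1 < s" "finite P" "X = P \<union> (\<lambda>p. p + s - 1) ` P" "\<forall>p\<in>P. \<forall>q\<in>P. p < q \<longrightarrow> p + s - 1 < q"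
    using h by (auto simp: shp_def)
  have e: "f ` ((\<lambda>p. p + s - 1) ` P) = (\<lambda>p. p + s - 1) ` (f ` P)"
    using sh by (force simp: image_image)
  have X': "f ` X = f ` P \<union> (\<lambda>p. p + s - 1) ` (f ` P)" using a(3) e by (simp add: image_Un)
  have gap: "\<forall>u\<in>f ` P. \<forall>v\<in>f ` P. u < v \<longrightarrow> u + s - 1 < v"
  proof (intro ballI impI)
    fix u v assume "u \<in> f ` P" "v \<in> f ` P" "u < v"
    then obtain p q where pq: "p \<in> P" "q \<in> P" "u = f p" "v = f q" by blast
    have PX: "P \<subseteq> X" using a(3) by blast
    have "p < q"
    proof (rule ccontr)
      assume "\<not> p < q"
      then have "q < p \<or> q = p" by arith
      then show False using mono[of q p] pq PX \<open>u < v\<close> by auto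
    qed
    then have "p + s - 1 < q" using a(4) pq by blast
    then have "f (p + s - 1) < f q" using mono pq a(3) by blast
    then show "u + s - 1 < v" using sh pq by simp
  qed
  show ?thesis unfolding shp_def using X' gap a(1,2) by auto
qed

lemma shp_add: "shp X s P \<Longrightarrow> shp ((\<lambda>x. x + c) ` X) s ((\<lambda>x. x + c) ` P)"
  by (rule shp_map) (auto simp: shp_def)

lemma shp_sub_const: "shp X s P \<Longrightarrow> \<forall>x\<in>X. c \<le> x \<Longrightarrow> shp ((\<lambda>x. x - c) ` X) s ((\<lambda>x. x - c) ` P)"
proof (rule shp_map)
  assume h: "shp X s P" "\<forall>x\<in>X. c \<le> x"
  fix p assume "p \<in> P"
  then have "c \<le> p" "1 < s" using h by (auto simp: shp_def)
  then show "p + s - 1 - c = p - c + s - 1" by simp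
qed auto

lemma shp_refl:
  assumes "shp X s P" "\<forall>x\<in>X. x \<le> N"
  shows "shp ((\<lambda>x. N - x) ` X) s ((\<lambda>p. N - (p + s - 1)) ` P)"
proof -
  have a: "1 < s" "finite P" "X = P \<union> (\<lambda>p. p + s - 1) ` P" "\<forall>p\<in>P. \<forall>q\<in>P. p < q \<longrightarrow> p + s - 1 < q"
    using assms(1) by (auto simp: shp_def)
  have le: "\<forall>p\<in>P. p + s - 1 \<le> N" using assms(2) a(3) by blast
  have e1: "(\<lambda>x. N - x) ` P = (\<lambda>p. N - (p + s - 1) + s - 1) ` P"
    using le a(1) by (intro image_cong) auto
  have e2: "(\<lambda>x. N - x) ` ((\<lambda>p. p + s - 1) ` P) = (\<lambda>p. N - (p + s - 1)) ` P"
    by (simp add: image_image)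
  have X': "(\<lambda>x. N - x) ` X = (\<lambda>p. N - (p + s - 1)) ` P \<union> (\<lambda>p. p + s - 1) ` ((\<lambda>p. N - (p + s - 1)) ` P)"
    using a(3) e1 e2 by (simp add: image_Un image_image Un_commute)
  have gap: "\<forall>p\<in>(\<lambda>p. N - (p + s - 1)) ` P. \<forall>q\<in>(\<lambda>p. N - (p + s - 1)) ` P. p < q \<longrightarrow> p + s - 1 < q"
  proof (intro ballI impI)
    fix u v assume "u \<in> (\<lambda>p. N - (p + s - 1)) ` P" "v \<in> (\<lambda>p. N - (p + s - 1)) ` P" "u < v"
    then obtain p q where pq: "p \<in> P" "q \<in> P" "u = N - (p + s - 1)" "v = N - (q + s - 1)" by blast
    have "p + s - 1 \<le> N" "q + s - 1 \<le> N" using le pq by auto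
    then have "q + s - 1 < p + s - 1" using \<open>u < v\<close> pq by linarith
    then have "q < p" by linarith
    then have "q + s - 1 < p" using a(4) pq by blast
    then show "u + s - 1 < v" using pq le a(1) by auto
  qed
  show ?thesis unfolding shp_def using X' gap a(1,2) by auto
qed


lemma th_split: "th (l1 @ c # l2) x = (if x \<le> sum_list l1 then th l1 x else if x \<le> sum_list l1 + c
   then 2 * sum_list l1 + c + 1 - x else sum_list l1 + c + th l2 (x - sum_list l1 - c))"
  by (cases "x \<le> sum_list l1"; cases "x \<le> sum_list l1 + c") (auto simp: th_append)

locale stp =
  fixes l1 l2 :: "nat list" and A L R d n m :: nat
  assumes L: "L = sum_list l1" and R: "R = sum_list l2" and RL: "R < L" and d: "d = L - R"
    and dA: "d \<le> A" and n: "n = L + A + R" and m: "m = L + (A - d) + R"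
begin

definition a where "a = l1 @ A # l2"
definition b where "b = l1 @ (A - d) # l2"
definition g where "g x = (if x \<le> L then x else if x \<le> L + A then n + 1 - x else x - d)"
definition h where "h y = (if y \<le> L then y else if y \<le> L + A - d then n + 1 - y else y + d)"

lemma sa: "sum_list a = n" using L R n by (simp add: a_def)
lemma sb: "sum_list b = m" using L R m by (simp add: b_def)
lemma Rd: "R + d = L" using RL d by simp
lemma md: "m + d = n" using m n dA by simp

lemma tha: "th a x = (if x \<le> L then th l1 x else if x \<le> L + A then 2 * L + A + 1 - x else L + A + th l2 (x - L - A))"
  unfolding a_def th_split L by simp
lemma thb: "th b x = (if x \<le> L then th l1 x else if x \<le> L + (A - d) then 2 * L + (A - d) + 1 - x else L + (A - d) + th l2 (x - L - (A - d)))"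
  unfolding b_def th_split L by simp

lemma th1: "1 \<le> x \<Longrightarrow> x \<le> L \<Longrightarrow> 1 \<le> th l1 x \<and> th l1 x \<le> L"
  using th_range L by simp
lemma th2: "1 \<le> x \<Longrightarrow> x \<le> R \<Longrightarrow> 1 \<le> th l2 x \<and> th l2 x \<le> R"
  using th_range R by simp

lemma ea: "x \<in> {1..n} \<Longrightarrow> y = th a x \<or> y = n + 1 - x \<Longrightarrow> (x, y) \<in> (medges a)\<^sup>*"
  using sa by (auto simp: medges_iff)
lemma eb: "x \<in> {1..m} \<Longrightarrow> y = th b x \<or> y = m + 1 - x \<Longrightarrow> (x, y) \<in> (medges b)\<^sup>*"
  using sb by (auto simp: medges_iff)

lemma Mpath: "R < z \<Longrightarrow> z \<le> L \<Longrightarrow> (z, z + d) \<in> (medges a)\<^sup>*"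
proof -
  assume z: "R < z" "z \<le> L"
  have u: "L < n + 1 - z" "n + 1 - z \<le> L + A" using z n Rd dA by linarith+
  have "th a (n + 1 - z) = z + d" using u unfolding tha using z n Rd by auto
  then have 2: "(n + 1 - z, z + d) \<in> (medges a)\<^sup>*" using ea[of "n + 1 - z" "z + d"] u n by simp
  have 1: "(z, n + 1 - z) \<in> (medges a)\<^sup>*" using ea[of z "n + 1 - z"] z n RL by simp
  show ?thesis using rtrancl_trans[OF 1 2] .
qed

sublocale tr: transfer a b g h
proof
  fix x assume x: "x \<in> {1..sum_list a}"
  then have x1: "1 \<le> x" "x \<le> n" using sa by auto
  show "g x \<in> {1..sum_list b}" using x1 unfolding sb g_def using n m Rd dA by auto
  show "(g x, g (th a x)) \<in> (medges b)\<^sup>*"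
  proof (cases "x \<le> L")
    case True
    then have "th a x = th l1 x" "th b x = th l1 x" by (simp_all add: tha thb)
    moreover have "th l1 x \<le> L" using th1 x1 True by blast
    ultimately show ?thesis using True x1 eb[of x "th l1 x"] m by (simp add: g_def)
  next
    case F1: False
    show ?thesis
    proof (cases "x \<le> L + A")
      case True
      have t: "th a x = 2 * L + A + 1 - x" using F1 True by (simp add: tha)
      have "g x = n + 1 - x" "g (th a x) = x - d" unfolding g_def t using F1 True n Rd by auto
      moreover have "m + 1 - (n + 1 - x) = x - d" using md x1 by simp
      moreover have "n + 1 - x \<in> {1..m}" using F1 True x1 n m Rd dA by auto
      ultimately show ?thesis using eb[of "n + 1 - x" "x - d"] by simp
    next
      case False
      let ?z = "x - L - A"
      have z: "1 \<le> ?z" "?z \<le> R" using False x1 n by auto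
      have t: "th a x = L + A + th l2 ?z" using F1 False by (simp add: tha)
      have nx: "\<not> x - d \<le> L + (A - d)" "\<not> x - d \<le> L" "x - d - L - (A - d) = ?z" using False dA by linarith+
      have tb: "th b (x - d) = L + (A - d) + th l2 ?z" using nx by (simp add: thb)
      have "g x = x - d" "g (th a x) = L + (A - d) + th l2 ?z" unfolding g_def t using F1 False th2[OF z] dA by auto
      moreover have "x - d \<in> {1..m}" using False x1 md dA by auto
      ultimately show ?thesis using eb[of "x - d" "L + (A - d) + th l2 ?z"] tb by simp
    qed
  qed
  show "(g x, g (sum_list a + 1 - x)) \<in> (medges b)\<^sup>*"
    unfolding sa
  proof (cases "x \<le> R")
    case True
    have "g x = x" "g (n + 1 - x) = m + 1 - x" unfolding g_def using True RL n md by auto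
    then show "(g x, g (n + 1 - x)) \<in> (medges b)\<^sup>*" using eb[of x "m + 1 - x"] True x1 m RL by simp
  next
    case F1: False
    show "(g x, g (n + 1 - x)) \<in> (medges b)\<^sup>*"
    proof (cases "x \<le> L")
      case True
      have "\<not> n + 1 - x \<le> L" "n + 1 - x \<le> L + A" using True F1 n Rd dA by linarith+
      then have "g x = x" "g (n + 1 - x) = x" unfolding g_def using True F1 n by auto
      then show ?thesis by simp
    next
      case F2: False
      show ?thesis
      proof (cases "x \<le> L + A")
        case True
        show ?thesis
        proof (cases "n + 1 - x \<le> L")
          case True
          then have "g x = n + 1 - x" "g (n + 1 - x) = n + 1 - x" unfolding g_def using F2 \<open>x \<le> L + A\<close> by auto
          then show ?thesis by simp
        next
          case False
          have "n + 1 - x \<le> L + A" "n + 1 - (n + 1 - x) = x" using F2 x1 n Rd by linarith+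
          then have gg: "g x = n + 1 - x" "g (n + 1 - x) = x" unfolding g_def using F2 \<open>x \<le> L + A\<close> False by auto
          have "n + 1 - x \<le> L + (A - d)" "2 * L + (A - d) + 1 - (n + 1 - x) = x" using F2 x1 n Rd dA by linarith+
          then have "th b (n + 1 - x) = x" unfolding thb using False dA by simp
          moreover have "n + 1 - x \<in> {1..m}" using False F2 x1 m n Rd dA by auto
          ultimately show ?thesis using gg eb[of "n + 1 - x" x] by simp
        qed
      next
        case False
        have gg: "g x = x - d" "g (n + 1 - x) = n + 1 - x" unfolding g_def using False x1 n RL by auto
        have "m + 1 - (x - d) = n + 1 - x" using md False dA Rd by auto
        moreover have "x - d \<in> {1..m}" using False x1 md dA Rd by auto
        ultimately show ?thesis using gg eb[of "x - d" "n + 1 - x"] by simp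
      qed
    qed
  qed
  show "(x, h (g x)) \<in> (medges a)\<^sup>*"
  proof (cases "x \<le> L")
    case True then show ?thesis by (simp add: g_def h_def)
  next
    case F1: False
    show ?thesis
    proof (cases "x \<le> L + A")
      case True
      show ?thesis
      proof (cases "n + 1 - x \<le> L")
        case True
        have "h (g x) = n + 1 - x" unfolding g_def h_def using True F1 \<open>x \<le> L + A\<close> by auto
        then show ?thesis using ea[of x "n + 1 - x"] x1 by simp
      next
        case False
        have gx: "g x = n + 1 - x" using F1 \<open>x \<le> L + A\<close> by (simp add: g_def)
        have "n + 1 - x \<le> L + A - d" "n + 1 - (n + 1 - x) = x" using F1 n Rd x1 by arith+
        then have "h (g x) = x" unfolding gx h_def using False by simp
        then show ?thesis by simp
      qed
    next
      case False
      have "h (g x) = x" unfolding g_def h_def using False F1 dA by auto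
      then show ?thesis by simp
    qed
  qed
next
  fix y assume y: "y \<in> {1..sum_list b}"
  then have y1: "1 \<le> y" "y \<le> m" using sb by auto
  show "h y \<in> {1..sum_list a}" using y1 unfolding sa h_def using n m Rd dA by auto
  show "g (h y) = y" unfolding g_def h_def using y1 n m Rd dA by auto
  show "(h y, h (th b y)) \<in> (medges a)\<^sup>*"
  proof (cases "y \<le> L")
    case True
    then have "th a y = th l1 y" "th b y = th l1 y" by (simp_all add: tha thb)
    moreover have "th l1 y \<le> L" using th1 y1 True by blast
    moreover have "h y = y" "h (th l1 y) = th l1 y" using True \<open>th l1 y \<le> L\<close> by (simp_all add: h_def)
    moreover have "y \<in> {1..n}" using y1 md by auto
    ultimately show ?thesis using ea[of y "th l1 y"] by simp
  next
    case F1: False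
    show ?thesis
    proof (cases "y \<le> L + A - d")
      case True
      have t: "th b y = 2 * L + (A - d) + 1 - y" using F1 True dA by (simp add: thb)
      have "h y = n + 1 - y" "h (th b y) = y" unfolding h_def t using F1 True n Rd dA by auto
      moreover have "n + 1 - y \<in> {1..n}" "n + 1 - (n + 1 - y) = y" using F1 y1 md by auto
      ultimately show ?thesis using ea[of "n + 1 - y" y] by simp
    next
      case False
      let ?z = "y - L - (A - d)"
      have z: "1 \<le> ?z" "?z \<le> R" using False y1 m dA by auto
      have t: "th b y = L + (A - d) + th l2 ?z" using F1 False dA by (simp add: thb)
      have ta: "th a (y + d) = L + A + th l2 ?z" using F1 False dA by (simp add: tha)
      have "h y = y + d" "h (th b y) = L + A + th l2 ?z" unfolding h_def t using F1 False th2[OF z] dA by auto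
      then show ?thesis using ea[of "y + d" "L + A + th l2 ?z"] ta False y1 md by simp
    qed
  qed
  show "(h y, h (sum_list b + 1 - y)) \<in> (medges a)\<^sup>*"
    unfolding sb
  proof (cases "y \<le> R")
    case True
    have "h y = y" "h (m + 1 - y) = n + 1 - y" unfolding h_def using True RL m md dA by auto
    then show "(h y, h (m + 1 - y)) \<in> (medges a)\<^sup>*" using ea[of y "n + 1 - y"] True y1 n RL by simp
  next
    case F1: False
    show "(h y, h (m + 1 - y)) \<in> (medges a)\<^sup>*"
    proof (cases "y \<le> L")
      case True
      have p1: "(y, y + d) \<in> (medges a)\<^sup>*" using Mpath F1 True by simp
      show ?thesis
      proof (cases "m + 1 - y \<le> L")
        case True
        have hh: "h y = y" "h (m + 1 - y) = m + 1 - y" unfolding h_def using True \<open>y \<le> L\<close> by auto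
        have "(y + d, n + 1 - (y + d)) \<in> (medges a)\<^sup>*" using ea[of "y + d" "n + 1 - (y + d)"] y1 n Rd \<open>y \<le> L\<close> dA by simp
        moreover have "n + 1 - (y + d) = m + 1 - y" using md by simp
        ultimately show ?thesis using hh p1 by (metis rtrancl_trans)
      next
        case False
        have "h y = y" "h (m + 1 - y) = y + d" unfolding h_def using False \<open>y \<le> L\<close> F1 y1 m md Rd dA by auto
        then show ?thesis using p1 by simp
      qed
    next
      case F2: False
      show ?thesis
      proof (cases "y \<le> L + A - d")
        case True
        show ?thesis
        proof (cases "m + 1 - y \<le> L")
          case True
          have hh: "h y = n + 1 - y" "h (m + 1 - y) = m + 1 - y" unfolding h_def using True F2 \<open>y \<le> L + A - d\<close> by auto
          have z: "R < m + 1 - y" "m + 1 - y \<le> L" using True \<open>y \<le> L + A - d\<close> m Rd dA by auto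
          have "(m + 1 - y, m + 1 - y + d) \<in> (medges a)\<^sup>*" using Mpath[OF z] .
          moreover have "m + 1 - y + d = n + 1 - y" using md y1 by simp
          ultimately show ?thesis using hh rt_sym by metis
        next
          case False
          have hh: "h y = n + 1 - y" "h (m + 1 - y) = y + d" unfolding h_def using False F2 \<open>y \<le> L + A - d\<close> y1 m md Rd dA by auto
          have "th a (y + d) = n + 1 - y" unfolding tha using F2 \<open>y \<le> L + A - d\<close> n Rd dA by auto
          then have "(y + d, n + 1 - y) \<in> (medges a)\<^sup>*" using ea[of "y + d" "n + 1 - y"] y1 n dA \<open>y \<le> L + A - d\<close> by simp
          then show ?thesis using hh rt_sym by metis
        qed
      next
        case False
        have hh: "h y = y + d" "h (m + 1 - y) = m + 1 - y" unfolding h_def using False y1 m Rd dA by auto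
        have "n + 1 - (y + d) = m + 1 - y" using md by simp
        then show ?thesis using hh ea[of "y + d" "m + 1 - y"] y1 md by auto
      qed
    qed
  qed
qed

end

definition nocut :: "nat set \<Rightarrow> nat \<Rightarrow> nat \<Rightarrow> bool" where
  "nocut P s q \<longleftrightarrow> (\<forall>p\<in>P. p \<le> q \<longrightarrow> p + s - 1 \<le> q)"

lemma nocut_ev: "shp X s P \<Longrightarrow> even (card {x\<in>X. x \<le> q}) \<Longrightarrow> nocut P s q"
  unfolding nocut_def using no_straddle by blast

lemma shp_pre:
  assumes "shp X s P" "nocut P s q"
  shows "shp {x\<in>X. x \<le> q} s {p\<in>P. p \<le> q}"
proof -
  have e: "{x\<in>X. x \<le> q} = {p\<in>P. p \<le> q} \<union> (\<lambda>p. p + s - 1) ` {p\<in>P. p \<le> q}"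
    using assms unfolding shp_def nocut_def by auto
  show ?thesis unfolding e by (rule shp_sub[OF assms(1)]) auto
qed

lemma shp_suf:
  assumes "shp X s P" "nocut P s q"
  shows "shp {x\<in>X. q < x} s {p\<in>P. q < p}"
proof -
  have e: "{x\<in>X. q < x} = {p\<in>P. q < p} \<union> (\<lambda>p. p + s - 1) ` {p\<in>P. q < p}"
  proof
    show "{x\<in>X. q < x} \<subseteq> {p\<in>P. q < p} \<union> (\<lambda>p. p + s - 1) ` {p\<in>P. q < p}"
    proof
      fix x assume x: "x \<in> {x\<in>X. q < x}"
      then have "x \<in> P \<or> (\<exists>p\<in>P. x = p + s - 1)" using assms(1) by (auto simp: shp_def)
      then show "x \<in> {p\<in>P. q < p} \<union> (\<lambda>p. p + s - 1) ` {p\<in>P. q < p}"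
      proof
        assume "x \<in> P" then show ?thesis using x by auto
      next
        assume "\<exists>p\<in>P. x = p + s - 1"
        then obtain p where p: "p \<in> P" "x = p + s - 1" by blast
        have "q < p"
        proof (rule ccontr)
          assume "\<not> q < p"
          then have "p + s - 1 \<le> q" using assms(2) p unfolding nocut_def by auto
          then show False using x p by auto
        qed
        then show ?thesis using p by auto
      qed
    qed
    show "{p\<in>P. q < p} \<union> (\<lambda>p. p + s - 1) ` {p\<in>P. q < p} \<subseteq> {x\<in>X. q < x}"
      using assms(1) unfolding shp_def by auto
  qed
  show ?thesis unfolding e by (rule shp_sub[OF assms(1)]) auto
qed

lemma shp_mid:
  assumes "shp X s P" "nocut P s lo" "nocut P s hi"
  shows "shp {x\<in>X. lo < x \<and> x \<le> hi} s {p\<in>P. lo < p \<and> p \<le> hi}"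
proof -
  have s1: "shp {x\<in>X. lo < x} s {p\<in>P. lo < p}" by (rule shp_suf[OF assms(1,2)])
  have "nocut {p\<in>P. lo < p} s hi" using assms(3) unfolding nocut_def by auto
  from shp_pre[OF s1 this] have "shp {x \<in> {x\<in>X. lo < x}. x \<le> hi} s {p \<in> {p\<in>P. lo < p}. p \<le> hi}" .
  moreover have "{x \<in> {x\<in>X. lo < x}. x \<le> hi} = {x\<in>X. lo < x \<and> x \<le> hi}" by auto
  moreover have "{p \<in> {p\<in>P. lo < p}. p \<le> hi} = {p\<in>P. lo < p \<and> p \<le> hi}" by auto
  ultimately show ?thesis by simp
qed

lemma refl_closed:
  assumes "shp Z s Q" "(\<lambda>y. N - y) ` Z = Z" "\<forall>z\<in>Z. z \<le> N" "q \<in> Q"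
  shows "N - (q + s - 1) \<in> Q"
proof -
  have "shp ((\<lambda>y. N - y) ` Z) s ((\<lambda>p. N - (p + s - 1)) ` Q)" by (rule shp_refl[OF assms(1,3)])
  then have "shp Z s ((\<lambda>p. N - (p + s - 1)) ` Q)" using assms(2) by simp
  then have "Q = (\<lambda>p. N - (p + s - 1)) ` Q" using shp_unique assms(1) by blast
  then show ?thesis using assms(4) by blast
qed

lemma ev_union:
  fixes X :: "nat set"
  assumes "finite X" "even (card {x\<in>X. x \<le> q0})" "even (card {x\<in>X. q0 < x \<and> x \<le> q1})" "q0 \<le> q1"
  shows "even (card {x\<in>X. x \<le> q1})"
proof -
  have "{x\<in>X. x \<le> q1} = {x\<in>X. x \<le> q0} \<union> {x\<in>X. q0 < x \<and> x \<le> q1}" using assms(4) by auto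
  moreover have "card ({x\<in>X. x \<le> q0} \<union> {x\<in>X. q0 < x \<and> x \<le> q1}) = card {x\<in>X. x \<le> q0} + card {x\<in>X. q0 < x \<and> x \<le> q1}"
    using assms(1) by (intro card_Un_disjoint) auto
  ultimately show ?thesis using assms(2,3) by simp
qed

lemma ev_diff:
  fixes X :: "nat set"
  assumes "finite X" "even (card {x\<in>X. x \<le> q1})" "even (card {x\<in>X. q0 < x \<and> x \<le> q1})" "q0 \<le> q1"
  shows "even (card {x\<in>X. x \<le> q0})"
proof -
  have "{x\<in>X. x \<le> q1} = {x\<in>X. x \<le> q0} \<union> {x\<in>X. q0 < x \<and> x \<le> q1}" using assms(4) by auto
  moreover have "card ({x\<in>X. x \<le> q0} \<union> {x\<in>X. q0 < x \<and> x \<le> q1}) = card {x\<in>X. x \<le> q0} + card {x\<in>X. q0 < x \<and> x \<le> q1}"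
    using assms(1) by (intro card_Un_disjoint) auto
  ultimately show ?thesis using assms(2,3) by simp
qed

lemma ev_blk:
  assumes X: "is_cycle a X" and q: "\<And>x. 1 \<le> x \<Longrightarrow> x \<le> q \<Longrightarrow> th a x \<le> q"
  shows "even (card {x\<in>X. x \<le> q})"
proof (rule even_invol)
  have XC: "X \<in> mcomponents a" using X by (simp add: is_cycle_iff)
  show "finite {x\<in>X. x \<le> q}" using comp_finite[OF XC] by simp
  show "\<forall>x\<in>{x\<in>X. x \<le> q}. th a x \<in> {x\<in>X. x \<le> q} \<and> th a (th a x) = x \<and> th a x \<noteq> x"
  proof
    fix x assume x: "x \<in> {x\<in>X. x \<le> q}"
    then have "1 \<le> x" using comp_sub[OF XC] by auto
    then show "th a x \<in> {x\<in>X. x \<le> q} \<and> th a (th a x) = x \<and> th a x \<noteq> x"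
      using x q comp_th[OF XC] th_invol X by (auto simp: is_cycle_iff)
  qed
qed

lemma ev_sym:
  assumes X: "is_cycle a X" and N: "N = sum_list a"
  shows "even (card {x\<in>X. lo < x \<and> x \<le> N - lo})"
proof (rule even_invol)
  have XC: "X \<in> mcomponents a" using X by (simp add: is_cycle_iff)
  show "finite {x\<in>X. lo < x \<and> x \<le> N - lo}" using comp_finite[OF XC] by simp
  show "\<forall>x\<in>{x\<in>X. lo < x \<and> x \<le> N - lo}. N + 1 - x \<in> {x\<in>X. lo < x \<and> x \<le> N - lo} \<and> N + 1 - (N + 1 - x) = x \<and> N + 1 - x \<noteq> x"
  proof
    fix x assume x: "x \<in> {x\<in>X. lo < x \<and> x \<le> N - lo}"
    then have "1 \<le> x" "x \<le> N" using comp_sub[OF XC] N by auto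
    then show "N + 1 - x \<in> {x\<in>X. lo < x \<and> x \<le> N - lo} \<and> N + 1 - (N + 1 - x) = x \<and> N + 1 - x \<noteq> x"
      using x comp_theta[OF XC] X N by (auto simp: is_cycle_iff)
  qed
qed

lemma comp_theta_img: "X \<in> mcomponents a \<Longrightarrow> N = sum_list a \<Longrightarrow> (\<lambda>y. N + 1 - y) ` X = X"
proof -
  assume XC: "X \<in> mcomponents a" and N: "N = sum_list a"
  have r: "\<And>x. x \<in> X \<Longrightarrow> 1 \<le> x \<and> x \<le> N" using comp_sub[OF XC] N by auto
  show ?thesis
  proof
    show "(\<lambda>y. N + 1 - y) ` X \<subseteq> X" using comp_theta[OF XC] N by auto
    show "X \<subseteq> (\<lambda>y. N + 1 - y) ` X"
    proof
      fix x assume "x \<in> X"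
      then have "x \<le> N" using r by blast
      then have "x = N + 1 - (N + 1 - x)" by simp
      moreover have "N + 1 - x \<in> X" using \<open>x \<in> X\<close> comp_theta[OF XC] N by blast
      ultimately show "x \<in> (\<lambda>y. N + 1 - y) ` X" by blast
    qed
  qed
qed


context stp
begin

lemma n2L: "2 * L \<le> n" using n Rd dA by simp
lemma nL: "n - L = L + A - d" using n Rd dA by simp
lemma mR: "m - R = L + A - d" using m Rd dA by simp

lemma gXa: "X \<in> mcomponents a \<Longrightarrow> x \<in> X \<Longrightarrow> h (g x) \<in> X"
proof -
  assume XC: "X \<in> mcomponents a" and x: "x \<in> X"
  have "X = mcomp a x" using comp_elem[OF XC x] .
  moreover have "x \<in> {1..sum_list a}" using comp_sub[OF XC] x by blast
  ultimately show ?thesis using tr.hg by (simp add: mcomp_def)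
qed

lemma hY: "X \<in> mcomponents a \<Longrightarrow> y \<in> g ` X \<Longrightarrow> h y \<in> X"
  using gXa by blast

lemma Xr: "X \<in> mcomponents a \<Longrightarrow> x \<in> X \<Longrightarrow> 1 \<le> x \<and> x \<le> n"
  using comp_sub sa by fastforce

lemma Xth: "X \<in> mcomponents a \<Longrightarrow> x \<in> X \<Longrightarrow> n + 1 - x \<in> X"
  using comp_theta sa by fastforce

lemma fa_fb:
  assumes x: "1 \<le> x" "x \<le> n" and f: "th a x = x \<or> n + 1 - x = x"
  shows "th b (g x) = g x \<or> m + 1 - g x = g x"
proof (cases "x \<le> L")
  case True
  then have "n + 1 - x \<noteq> x" using n2L by linarith
  then have "th l1 x = x" using f True by (simp add: tha)
  then show ?thesis using True by (simp add: thb g_def)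
next
  case F1: False
  show ?thesis
  proof (cases "x \<le> L + A")
    case True
    have gx: "g x = n + 1 - x" using F1 True by (simp add: g_def)
    from f show ?thesis
    proof
      assume "th a x = x"
      then have "2 * L + A + 1 - x = x" using F1 True by (simp add: tha)
      then have "m + 1 - (n + 1 - x) = n + 1 - x" using md n Rd dA True by linarith
      then show ?thesis using gx by simp
    next
      assume e: "n + 1 - x = x"
      then have "2 * x = n + 1" using x by linarith
      then have e2: "2 * x = 2 * L + (A - d) + 1" using n Rd dA by linarith
      have "A - d \<noteq> 0"
      proof
        assume "A - d = 0"
        then have "2 * x = 2 * L + 1" using e2 by simp
        then show False by presburger
      qed
      then have "x \<le> L + (A - d)" using e2 by linarith
      moreover have "2 * L + (A - d) + 1 - x = x" using \<open>2 * x = n + 1\<close> n Rd dA by linarith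
      ultimately have "th b x = x" using F1 by (simp add: thb)
      then show ?thesis using gx e by simp
    qed
  next
    case False
    then have "n + 1 - x \<noteq> x" using n RL by linarith
    then have t: "th a x = x" using f by simp
    let ?z = "x - L - A"
    have "L + A + th l2 ?z = x" using t F1 False by (simp add: tha)
    then have "th l2 ?z = ?z" by linarith
    moreover have nx: "\<not> x - d \<le> L + (A - d)" "\<not> x - d \<le> L" "x - d - L - (A - d) = ?z" using False dA by linarith+
    ultimately have "th b (x - d) = x - d" using dA False by (simp add: thb)
    then show ?thesis using F1 False by (simp add: g_def)
  qed
qed

lemma nLA: "n + d = 2 * L + A" using n Rd by simp

lemma fb_key:
  assumes y: "1 \<le> y" "y \<le> m" and e: "m + 1 - y = y"
  shows "th a (n + 1 - y) = n + 1 - y"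
proof -
  have e2: "2 * y = m + 1" using e y by linarith
  have e3: "n + 1 - y = y + d" using e2 md by linarith
  have u1: "L < y + d" using e2 m Rd dA by linarith
  have u2: "y + d \<le> L + A" using e2 m Rd dA RL by linarith
  have u3: "2 * L + A + 1 - (y + d) = y + d" using e2 md nLA by linarith
  have "th a (y + d) = y + d" using u1 u2 u3 by (simp add: tha)
  then show ?thesis using e3 by simp
qed

lemma fb_M:
  assumes y: "1 \<le> y" "y \<le> m" "y \<le> L" and f: "th b y = y \<or> m + 1 - y = y"
  shows "(th a (h y) = h y \<or> n + 1 - h y = h y) \<or> (th a (n + 1 - h y) = n + 1 - h y \<or> n + 1 - (n + 1 - h y) = n + 1 - h y)"
proof -
  have hy: "h y = y" using y by (simp add: h_def)
  from f show ?thesis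
  proof
    assume "th b y = y"
    then have "th a y = y" using y by (simp add: tha thb)
    then show ?thesis using hy by simp
  next
    assume e: "m + 1 - y = y"
    then show ?thesis using hy fb_key y by simp
  qed
qed

lemma fb_C:
  assumes y: "1 \<le> y" "y \<le> m" "L < y" "y \<le> L + A - d" and f: "th b y = y \<or> m + 1 - y = y"
  shows "(th a (h y) = h y \<or> n + 1 - h y = h y) \<or> (th a (n + 1 - h y) = n + 1 - h y \<or> n + 1 - (n + 1 - h y) = n + 1 - h y)"
proof -
  have hy: "h y = n + 1 - y" using y by (simp add: h_def)
  have ny: "n + 1 - (n + 1 - y) = y" using y md by linarith
  from f show ?thesis
  proof
    assume t: "th b y = y"
    have y2: "y \<le> L + (A - d)" using y dA by linarith
    have "th b y = 2 * L + (A - d) + 1 - y" using y(3) y(4) y2 unfolding thb by simp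
    then have "2 * L + (A - d) + 1 - y = y" using t by simp
    then have "2 * y = n + 1" using nLA dA by linarith
    then have "n + 1 - (n + 1 - y) = n + 1 - y" using ny by linarith
    then show ?thesis using hy by simp
  next
    assume e: "m + 1 - y = y"
    then have "th a (n + 1 - y) = n + 1 - y" using fb_key y by simp
    then show ?thesis using hy by simp
  qed
qed

lemma fb_R:
  assumes y: "1 \<le> y" "y \<le> m" "L + A - d < y" and f: "th b y = y \<or> m + 1 - y = y"
  shows "(th a (h y) = h y \<or> n + 1 - h y = h y) \<or> (th a (n + 1 - h y) = n + 1 - h y \<or> n + 1 - (n + 1 - h y) = n + 1 - h y)"
proof -
  have "\<not> y \<le> L" "\<not> y \<le> L + A - d" using y dA by linarith+
  then have hy: "h y = y + d" by (simp add: h_def)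
  have "2 * y > m + 1" using y m Rd dA RL by linarith
  then have "m + 1 - y \<noteq> y" by linarith
  then have t: "th b y = y" using f by simp
  define z where "z = y - L - (A - d)"
  have nb: "\<not> y \<le> L + (A - d)" "\<not> y \<le> L" using y dA by linarith+
  have "th b y = L + (A - d) + th l2 z" using nb unfolding thb z_def by simp
  then have "L + (A - d) + th l2 z = y" using t by simp
  then have tz: "th l2 z = z" unfolding z_def by linarith
  have "\<not> y + d \<le> L + A" "\<not> y + d \<le> L" "y + d - L - A = z" using y dA unfolding z_def by linarith+
  then have "th a (y + d) = L + A + th l2 z" by (simp add: tha)
  also have "\<dots> = y + d" using tz z_def nb dA by linarith
  finally show ?thesis using hy by simp
qed

lemma fb_fa:
  assumes y: "1 \<le> y" "y \<le> m" and f: "th b y = y \<or> m + 1 - y = y"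
  shows "(th a (h y) = h y \<or> n + 1 - h y = h y) \<or> (th a (n + 1 - h y) = n + 1 - h y \<or> n + 1 - (n + 1 - h y) = n + 1 - h y)"
proof (cases "y \<le> L")
  case True then show ?thesis using fb_M y f by blast
next
  case False
  show ?thesis
  proof (cases "y \<le> L + A - d")
    case True then show ?thesis using fb_C y f False by simp
  next
    case F2: False then show ?thesis using fb_R[OF y] f by simp
  qed
qed

lemma gX_comp: "X \<in> mcomponents a \<Longrightarrow> g ` X \<in> mcomponents b"
  using tr.F_comp by (simp add: tr.F_def)

lemma cyc: "X \<in> mcomponents a \<Longrightarrow> is_cycle b (g ` X) \<longleftrightarrow> is_cycle a X"
proof -
  assume XC: "X \<in> mcomponents a"
  have YC: "g ` X \<in> mcomponents b" using gX_comp[OF XC] .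
  have "(\<exists>x\<in>X. th a x = x \<or> n + 1 - x = x) \<longleftrightarrow> (\<exists>y\<in>g ` X. th b y = y \<or> m + 1 - y = y)"
  proof
    assume "\<exists>x\<in>X. th a x = x \<or> n + 1 - x = x"
    then obtain x where x: "x \<in> X" "th a x = x \<or> n + 1 - x = x" by blast
    then have "th b (g x) = g x \<or> m + 1 - g x = g x" using fa_fb Xr[OF XC] by blast
    then show "\<exists>y\<in>g ` X. th b y = y \<or> m + 1 - y = y" using x by blast
  next
    assume "\<exists>y\<in>g ` X. th b y = y \<or> m + 1 - y = y"
    then obtain y where y: "y \<in> g ` X" "th b y = y \<or> m + 1 - y = y" by blast
    have "y \<in> {1..m}" using comp_sub[OF YC] y sb by auto
    then have "(th a (h y) = h y \<or> n + 1 - h y = h y) \<or> (th a (n + 1 - h y) = n + 1 - h y \<or> n + 1 - (n + 1 - h y) = n + 1 - h y)"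
      using fb_fa y by auto
    moreover have "h y \<in> X" using hY[OF XC y(1)] .
    moreover have "n + 1 - h y \<in> X" using Xth[OF XC] \<open>h y \<in> X\<close> .
    ultimately show "\<exists>x\<in>X. th a x = x \<or> n + 1 - x = x" by blast
  qed
  moreover have "is_cycle b (g ` X) \<longleftrightarrow> \<not> (\<exists>y\<in>g ` X. th b y = y \<or> m + 1 - y = y)"
    unfolding is_cycle_iff sb using YC by auto
  moreover have "is_cycle a X \<longleftrightarrow> \<not> (\<exists>x\<in>X. th a x = x \<or> n + 1 - x = x)"
    unfolding is_cycle_iff sa using XC by auto
  ultimately show ?thesis by simp
qed

end

context stp
begin

lemma gv1: "x \<le> L \<Longrightarrow> g x = x" by (simp add: g_def)
lemma gv2: "L < x \<Longrightarrow> x \<le> L + A \<Longrightarrow> g x = n + 1 - x" by (simp add: g_def)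
lemma gv3: "L + A < x \<Longrightarrow> g x = x - d" by (simp add: g_def)
lemma hv1: "y \<le> L \<Longrightarrow> h y = y" by (simp add: h_def)
lemma hv2: "L < y \<Longrightarrow> y \<le> L + A - d \<Longrightarrow> h y = n + 1 - y" by (simp add: h_def)
lemma hv3: "L + A - d < y \<Longrightarrow> h y = y + d"
proof -
  assume y: "L + A - d < y"
  then have "\<not> y \<le> L" "\<not> y \<le> L + A - d" using dA by linarith+
  then show ?thesis by (simp add: h_def)
qed

lemma ALd: "L \<le> L + A - d" using dA by simp

lemma nocF:
  assumes X: "is_cycle a X" and P: "shp X s P"
  shows "nocut P s L \<and> nocut P s (L + A) \<and> nocut P s (L + A - d)"
proof -
  have XC: "X \<in> mcomponents a" using X by (simp add: is_cycle_iff)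
  have e1: "even (card {x\<in>X. x \<le> L})"
  proof (rule ev_blk[OF X])
    fix x assume "1 \<le> x" "x \<le> L" then show "th a x \<le> L" using th1 by (simp add: tha)
  qed
  have e3: "even (card {x\<in>X. x \<le> L + A})"
  proof (rule ev_blk[OF X])
    fix x assume x: "1 \<le> x" "x \<le> L + A"
    show "th a x \<le> L + A"
    proof (cases "x \<le> L")
      case True
      then have "th l1 x \<le> L" using th1[of x] x by simp
      then show ?thesis using True by (simp add: tha)
    next
      case False then show ?thesis using x by (simp add: tha)
    qed
  qed
  have "even (card {x\<in>X. L < x \<and> x \<le> n - L})" by (rule ev_sym[OF X]) (simp add: sa)
  then have e2': "even (card {x\<in>X. L < x \<and> x \<le> L + A - d})" using nL by simp
  have e2: "even (card {x\<in>X. x \<le> L + A - d})"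
    by (rule ev_union[OF comp_finite[OF XC] e1 e2' ALd])
  show ?thesis using nocut_ev[OF P] e1 e2 e3 by blast
qed

lemma gX_eq:
  assumes XC: "X \<in> mcomponents a"
  shows "g ` X = {x\<in>X. x \<le> L + A - d} \<union> (\<lambda>x. x - d) ` {x\<in>X. L + A < x}"
proof
  show "g ` X \<subseteq> {x\<in>X. x \<le> L + A - d} \<union> (\<lambda>x. x - d) ` {x\<in>X. L + A < x}"
  proof
    fix y assume "y \<in> g ` X"
    then obtain x where x: "x \<in> X" "y = g x" by blast
    have xr: "1 \<le> x" "x \<le> n" using Xr[OF XC x(1)] by auto
    show "y \<in> {x\<in>X. x \<le> L + A - d} \<union> (\<lambda>x. x - d) ` {x\<in>X. L + A < x}"
    proof (cases "x \<le> L")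
      case True then show ?thesis using x gv1 ALd by auto
    next
      case F1: False
      show ?thesis
      proof (cases "x \<le> L + A")
        case True
        have "y = n + 1 - x" using gv2 F1 True x by simp
        moreover have "n + 1 - x \<in> X" using Xth[OF XC x(1)] .
        moreover have "n + 1 - x \<le> L + A - d" using F1 nL by linarith
        ultimately show ?thesis by blast
      next
        case False then show ?thesis using x gv3 by auto
      qed
    qed
  qed
  show "{x\<in>X. x \<le> L + A - d} \<union> (\<lambda>x. x - d) ` {x\<in>X. L + A < x} \<subseteq> g ` X"
  proof
    fix y assume y: "y \<in> {x\<in>X. x \<le> L + A - d} \<union> (\<lambda>x. x - d) ` {x\<in>X. L + A < x}"
    then show "y \<in> g ` X"
    proof
      assume y1: "y \<in> {x\<in>X. x \<le> L + A - d}"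
      show ?thesis
      proof (cases "y \<le> L")
        case True then show ?thesis using y1 gv1 by force
      next
        case False
        have yr: "1 \<le> y" "y \<le> n" using Xr[OF XC] y1 by auto
        have x': "n + 1 - y \<in> X" using Xth[OF XC] y1 by blast
        have "L < n + 1 - y" "n + 1 - y \<le> L + A" using y1 yr nL False by auto
        then have "g (n + 1 - y) = n + 1 - (n + 1 - y)" using gv2 by blast
        also have "\<dots> = y" using yr by simp
        finally show ?thesis using x' by force
      qed
    next
      assume "y \<in> (\<lambda>x. x - d) ` {x\<in>X. L + A < x}"
      then obtain x where "x \<in> X" "L + A < x" "y = x - d" by blast
      then show ?thesis using gv3 by force
    qed
  qed
qed

definition Pf where "Pf P = {p\<in>P. p \<le> L + A - d} \<union> (\<lambda>x. x - d) ` {p\<in>P. L + A < p}"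

lemma shpF:
  assumes X: "is_cycle a X" and P: "shp X s P"
  shows "shp (g ` X) s (Pf P)"
proof -
  have XC: "X \<in> mcomponents a" using X by (simp add: is_cycle_iff)
  have nc: "nocut P s L" "nocut P s (L + A)" "nocut P s (L + A - d)" using nocF[OF X P] by auto
  have s1: "shp {x\<in>X. x \<le> L + A - d} s {p\<in>P. p \<le> L + A - d}" by (rule shp_pre[OF P nc(3)])
  have s2: "shp {x\<in>X. L + A < x} s {p\<in>P. L + A < p}" by (rule shp_suf[OF P nc(2)])
  have s2': "shp ((\<lambda>x. x - d) ` {x\<in>X. L + A < x}) s ((\<lambda>x. x - d) ` {p\<in>P. L + A < p})"
    by (rule shp_sub_const[OF s2]) (use dA in auto)
  have sep: "\<forall>x\<in>{x\<in>X. x \<le> L + A - d}. \<forall>y\<in>(\<lambda>x. x - d) ` {x\<in>X. L + A < x}. x < y"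
    using dA by auto
  show ?thesis unfolding gX_eq[OF XC] Pf_def by (rule shp_union[OF s1 s2' sep])
qed

lemma nocB:
  assumes X: "is_cycle a X" and P: "shp (g ` X) s P'"
  shows "nocut P' s L \<and> nocut P' s (L + A - d) \<and> nocut P' s R"
proof -
  have XC: "X \<in> mcomponents a" using X by (simp add: is_cycle_iff)
  have Y: "is_cycle b (g ` X)" using cyc[OF XC] X by simp
  have YC: "g ` X \<in> mcomponents b" using gX_comp[OF XC] .
  have e1: "even (card {x\<in>g ` X. x \<le> L})"
  proof (rule ev_blk[OF Y])
    fix x assume "1 \<le> x" "x \<le> L" then show "th b x \<le> L" using th1 by (simp add: thb)
  qed
  have e2: "even (card {x\<in>g ` X. x \<le> L + A - d})"
  proof (rule ev_blk[OF Y])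
    fix x assume x: "1 \<le> x" "x \<le> L + A - d"
    show "th b x \<le> L + A - d"
    proof (cases "x \<le> L")
      case True
      then have "th l1 x \<le> L" using th1[of x] x by simp
      then show ?thesis using True ALd by (simp add: thb)
    next
      case False then show ?thesis using x dA by (simp add: thb)
    qed
  qed
  have "even (card {x\<in>g ` X. R < x \<and> x \<le> m - R})" by (rule ev_sym[OF Y]) (simp add: sb)
  then have e3': "even (card {x\<in>g ` X. R < x \<and> x \<le> L + A - d})" using mR by simp
  have e3: "even (card {x\<in>g ` X. x \<le> R})"
    by (rule ev_diff[OF comp_finite[OF YC] e2 e3']) (use RL ALd in linarith)
  show ?thesis using nocut_ev[OF P] e1 e2 e3 by blast
qed

lemma X_eq:
  assumes XC: "X \<in> mcomponents a"
  shows "X = {y\<in>g ` X. y \<le> L + A - d} \<union> (\<lambda>y. n + 1 - y) ` {y\<in>g ` X. R < y \<and> y \<le> L} \<union> (\<lambda>y. y + d) ` {y\<in>g ` X. L + A - d < y}"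
    (is "X = ?A \<union> ?B \<union> ?C")
proof
  show "X \<subseteq> ?A \<union> ?B \<union> ?C"
  proof
    fix x assume x: "x \<in> X"
    have xr: "1 \<le> x" "x \<le> n" using Xr[OF XC x] by auto
    show "x \<in> ?A \<union> ?B \<union> ?C"
    proof (cases "x \<le> L")
      case True then have "x \<in> ?A" using x gv1 ALd by force
      then show ?thesis by blast
    next
      case F1: False
      show ?thesis
      proof (cases "x \<le> L + A - d")
        case True
        have x': "n + 1 - x \<in> X" using Xth[OF XC x] .
        have "L < n + 1 - x" "n + 1 - x \<le> L + A" using True F1 xr nL by auto
        then have "g (n + 1 - x) = n + 1 - (n + 1 - x)" using gv2 by blast
        also have "\<dots> = x" using xr by simp
        finally have "x \<in> g ` X" using x' by force
        then have "x \<in> ?A" using True by blast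
        then show ?thesis by blast
      next
        case F2: False
        show ?thesis
        proof (cases "x \<le> L + A")
          case True
          have gx: "g x = n + 1 - x" using gv2 F1 True by simp
          have "R < n + 1 - x" "n + 1 - x \<le> L" using True F2 xr n nL by auto
          moreover have "x = n + 1 - (n + 1 - x)" using xr by simp
          ultimately have "x \<in> ?B" using gx x by force
          then show ?thesis by blast
        next
          case False
          have gx: "g x = x - d" using gv3 False by simp
          have "L + A - d < x - d" "x = x - d + d" using False dA by auto
          then have "x \<in> ?C" using gx x by force
          then show ?thesis by blast
        qed
      qed
    qed
  qed
  show "?A \<union> ?B \<union> ?C \<subseteq> X"
  proof
    fix x assume x: "x \<in> ?A \<union> ?B \<union> ?C"
    have YC: "g ` X \<in> mcomponents b" using gX_comp[OF XC] .
    have yr: "\<And>y. y \<in> g ` X \<Longrightarrow> 1 \<le> y \<and> y \<le> m" using comp_sub[OF YC] sb by fastforce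
    show "x \<in> X"
    proof (cases "x \<in> ?A")
      case True
      then have xg: "x \<in> g ` X" "x \<le> L + A - d" by auto
      have hx: "h x \<in> X" using hY[OF XC xg(1)] .
      show ?thesis
      proof (cases "x \<le> L")
        case True then show ?thesis using hx hv1 by simp
      next
        case False
        then have "h x = n + 1 - x" using hv2 xg by simp
        then have "n + 1 - (n + 1 - x) \<in> X" using Xth[OF XC] hx by simp
        moreover have "x \<le> n" using yr[OF xg(1)] md by linarith
        ultimately show ?thesis by simp
      qed
    next
      case nA: False
      show ?thesis
      proof (cases "x \<in> ?B")
        case True
        then obtain y where y: "y \<in> g ` X" "R < y" "y \<le> L" "x = n + 1 - y" by blast
        then have "h y = y" using hv1 by simp
        then have "y \<in> X" using hY[OF XC y(1)] by simp
        then show ?thesis using Xth[OF XC] y by simp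
      next
        case False
        then have "x \<in> ?C" using x nA by blast
        then obtain y where y: "y \<in> g ` X" "L + A - d < y" "x = y + d" by blast
        then have "h y = y + d" using hv3 by simp
        then show ?thesis using hY[OF XC y(1)] y by simp
      qed
    qed
  qed
qed

definition Pb where "Pb s P' = {p\<in>P'. p \<le> L + A - d} \<union> (\<lambda>p. n + 1 - (p + s - 1)) ` {p\<in>P'. R < p \<and> p \<le> L} \<union> (\<lambda>p. p + d) ` {p\<in>P'. L + A - d < p}"

lemma shpB:
  assumes X: "is_cycle a X" and P: "shp (g ` X) s P'"
  shows "shp X s (Pb s P')"
proof -
  have XC: "X \<in> mcomponents a" using X by (simp add: is_cycle_iff)
  have YC: "g ` X \<in> mcomponents b" using gX_comp[OF XC] .
  have yr: "\<And>y. y \<in> g ` X \<Longrightarrow> 1 \<le> y \<and> y \<le> m" using comp_sub[OF YC] sb by fastforce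
  have nc: "nocut P' s L" "nocut P' s (L + A - d)" "nocut P' s R" using nocB[OF X P] by auto
  have s1: "shp {y\<in>g ` X. y \<le> L + A - d} s {p\<in>P'. p \<le> L + A - d}" by (rule shp_pre[OF P nc(2)])
  have s2: "shp {y\<in>g ` X. R < y \<and> y \<le> L} s {p\<in>P'. R < p \<and> p \<le> L}" by (rule shp_mid[OF P nc(3) nc(1)])
  have s2': "shp ((\<lambda>y. n + 1 - y) ` {y\<in>g ` X. R < y \<and> y \<le> L}) s ((\<lambda>p. n + 1 - (p + s - 1)) ` {p\<in>P'. R < p \<and> p \<le> L})"
    by (rule shp_refl[OF s2]) (use RL n in auto)
  have s3: "shp {y\<in>g ` X. L + A - d < y} s {p\<in>P'. L + A - d < p}" by (rule shp_suf[OF P nc(2)])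
  have s3': "shp ((\<lambda>y. y + d) ` {y\<in>g ` X. L + A - d < y}) s ((\<lambda>p. p + d) ` {p\<in>P'. L + A - d < p})"
    by (rule shp_add[OF s3])
  have sep1: "\<forall>x\<in>{y\<in>g ` X. y \<le> L + A - d}. \<forall>y\<in>(\<lambda>y. n + 1 - y) ` {y\<in>g ` X. R < y \<and> y \<le> L}. x < y"
    using nL n by auto
  have s12: "shp ({y\<in>g ` X. y \<le> L + A - d} \<union> (\<lambda>y. n + 1 - y) ` {y\<in>g ` X. R < y \<and> y \<le> L}) s
     ({p\<in>P'. p \<le> L + A - d} \<union> (\<lambda>p. n + 1 - (p + s - 1)) ` {p\<in>P'. R < p \<and> p \<le> L})"
    by (rule shp_union[OF s1 s2' sep1])
  have sep2: "\<forall>x\<in>{y\<in>g ` X. y \<le> L + A - d} \<union> (\<lambda>y. n + 1 - y) ` {y\<in>g ` X. R < y \<and> y \<le> L}.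
      \<forall>y\<in>(\<lambda>y. y + d) ` {y\<in>g ` X. L + A - d < y}. x < y"
    using n dA Rd by auto
  show ?thesis unfolding Pb_def using shp_union[OF s12 s3' sep2] X_eq[OF XC] by simp
qed

end

context stp
begin

lemma Z_refl:
  assumes XC: "X \<in> mcomponents a"
  shows "(\<lambda>y. n + 1 - y) ` {y\<in>g ` X. L < y \<and> y \<le> L + A - d} = {y\<in>g ` X. L < y \<and> y \<le> L + A - d}"
proof -
  have YC: "g ` X \<in> mcomponents b" using gX_comp[OF XC] .
  have n2: "2 * L + (A - d) = n" using nLA dA by linarith
  have cl: "\<And>y. y \<in> g ` X \<Longrightarrow> L < y \<Longrightarrow> y \<le> L + A - d \<Longrightarrow> n + 1 - y \<in> g ` X \<and> L < n + 1 - y \<and> n + 1 - y \<le> L + A - d"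
  proof -
    fix y assume y: "y \<in> g ` X" "L < y" "y \<le> L + A - d"
    have "y \<le> L + (A - d)" using y dA by linarith
    then have "th b y = 2 * L + (A - d) + 1 - y" using y by (simp add: thb)
    then have "th b y = n + 1 - y" using n2 by simp
    then have "n + 1 - y \<in> g ` X" using comp_th[OF YC y(1)] by simp
    moreover have "L < n + 1 - y" "n + 1 - y \<le> L + A - d" using y nL by linarith+
    ultimately show "n + 1 - y \<in> g ` X \<and> L < n + 1 - y \<and> n + 1 - y \<le> L + A - d" by simp
  qed
  show ?thesis
  proof
    show "(\<lambda>y. n + 1 - y) ` {y\<in>g ` X. L < y \<and> y \<le> L + A - d} \<subseteq> {y\<in>g ` X. L < y \<and> y \<le> L + A - d}"
      using cl by blast
    show "{y\<in>g ` X. L < y \<and> y \<le> L + A - d} \<subseteq> (\<lambda>y. n + 1 - y) ` {y\<in>g ` X. L < y \<and> y \<le> L + A - d}"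
    proof
      fix z assume z: "z \<in> {y\<in>g ` X. L < y \<and> y \<le> L + A - d}"
      then have "n + 1 - z \<in> {y\<in>g ` X. L < y \<and> y \<le> L + A - d}" using cl by blast
      moreover have "z = n + 1 - (n + 1 - z)" using z nL by auto
      ultimately show "z \<in> (\<lambda>y. n + 1 - y) ` {y\<in>g ` X. L < y \<and> y \<le> L + A - d}" by blast
    qed
  qed
qed

lemma ins_fwd:
  assumes XC: "X \<in> mcomponents a" and YC: "Y \<in> mcomponents a" and X: "is_cycle a X"
    and P: "shp X s P" and s2: "2 < s" and y: "y \<in> Y" and x: "x \<in> P" "x \<le> y" "y \<le> x + s - 1"
  shows "\<exists>y'\<in>g ` Y. \<exists>x'\<in>Pf P. x' \<le> y' \<and> y' \<le> x' + s - 1"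
proof -
  have nc: "nocut P s L" "nocut P s (L + A)" "nocut P s (L + A - d)" using nocF[OF X P] by auto
  have yr: "1 \<le> y" "y \<le> n" using Xr[OF YC y] by auto
  have "x + s - 1 \<in> X" using P x by (auto simp: shp_def)
  then have xr: "x + s - 1 \<le> n" using Xr[OF XC] by blast
  show ?thesis
  proof (cases "y \<le> L")
    case True
    then have "g y = y" by (rule gv1)
    moreover have "x \<in> Pf P" using x True ALd by (auto simp: Pf_def)
    ultimately have "x \<le> g y \<and> g y \<le> x + s - 1" "x \<in> Pf P" using x by simp_all
    moreover have "g y \<in> g ` Y" using y by blast
    ultimately show ?thesis by blast
  next
    case F1: False
    show ?thesis
    proof (cases "y \<le> L + A")
      case True
      have gy: "g y = n + 1 - y" using gv2 F1 True by simp
      have xL: "L < x"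
      proof (rule ccontr)
        assume "\<not> L < x"
        then have "x + s - 1 \<le> L" using nc(1) x unfolding nocut_def by auto
        then show False using x F1 by linarith
      qed
      have img: "(\<lambda>y. n + 1 - y) ` X = X" using comp_theta_img[OF XC] sa by simp
      have bnd: "\<forall>z\<in>X. z \<le> n + 1" using Xr[OF XC] by fastforce
      have x'P: "n + 1 - (x + s - 1) \<in> P" by (rule refl_closed[OF P img bnd x(1)])
      have "n + 1 - (x + s - 1) \<le> L + A - d" using xL s2 nL xr by linarith
      then have x'Pf: "n + 1 - (x + s - 1) \<in> Pf P" using x'P by (auto simp: Pf_def)
      have w1: "n + 1 - (x + s - 1) \<le> n + 1 - y" using x by linarith
      have w2: "n + 1 - y \<le> n + 1 - (x + s - 1) + s - 1" using x xr s2 by linarith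
      have "g y \<in> g ` Y" using y by blast
      then show ?thesis using x'Pf w1 w2 gy by (metis)
    next
      case False
      have gy: "g y = y - d" using gv3 False by simp
      have xL: "L + A < x"
      proof (rule ccontr)
        assume "\<not> L + A < x"
        then have "x + s - 1 \<le> L + A" using nc(2) x unfolding nocut_def by auto
        then show False using x False by linarith
      qed
      have "x - d \<in> Pf P" using x xL by (auto simp: Pf_def)
      moreover have "x - d \<le> y - d" "y - d \<le> x - d + s - 1" using x xL dA s2 by linarith+
      moreover have "g y \<in> g ` Y" using y by blast
      ultimately show ?thesis using gy by metis
    qed
  qed
qed

lemma ins_bwd:
  assumes XC: "X \<in> mcomponents a" and YC: "Y \<in> mcomponents a" and X: "is_cycle a X"
    and P: "shp (g ` X) s P'" and s2: "2 < s" and y: "y \<in> g ` Y" and x: "x \<in> P'" "x \<le> y" "y \<le> x + s - 1"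
  shows "\<exists>y'\<in>Y. \<exists>x'\<in>Pb s P'. x' \<le> y' \<and> y' \<le> x' + s - 1"
proof -
  have nc: "nocut P' s L" "nocut P' s (L + A - d)" "nocut P' s R" using nocB[OF X P] by auto
  have YC': "g ` X \<in> mcomponents b" using gX_comp[OF XC] .
  have YY: "g ` Y \<in> mcomponents b" using gX_comp[OF YC] .
  have yr: "1 \<le> y" "y \<le> m" using comp_sub[OF YY] y sb by auto
  have hy: "h y \<in> Y" using hY[OF YC y] .
  have "x + s - 1 \<in> g ` X" using P x by (auto simp: shp_def)
  then have xr: "x + s - 1 \<le> m" using comp_sub[OF YC'] sb by auto
  show ?thesis
  proof (cases "y \<le> L")
    case True
    then have "h y = y" by (rule hv1)
    moreover have "x \<in> Pb s P'" using x True ALd by (auto simp: Pb_def)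
    ultimately have "x \<le> h y \<and> h y \<le> x + s - 1" "x \<in> Pb s P'" using x by simp_all
    then show ?thesis using hy by blast
  next
    case F1: False
    show ?thesis
    proof (cases "y \<le> L + A - d")
      case True
      have hy2: "h y = n + 1 - y" using hv2 F1 True by simp
      have xL: "L < x"
      proof (rule ccontr)
        assume "\<not> L < x"
        then have "x + s - 1 \<le> L" using nc(1) x unfolding nocut_def by auto
        then show False using x F1 by linarith
      qed
      have xU: "x + s - 1 \<le> L + A - d" using nc(2) x True unfolding nocut_def by auto
      have Z: "shp {y\<in>g ` X. L < y \<and> y \<le> L + A - d} s {p\<in>P'. L < p \<and> p \<le> L + A - d}"
        by (rule shp_mid[OF P nc(1) nc(2)])
      have bnd: "\<forall>z\<in>{y\<in>g ` X. L < y \<and> y \<le> L + A - d}. z \<le> n + 1" using nL by auto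
      have xQ: "x \<in> {p\<in>P'. L < p \<and> p \<le> L + A - d}" using x xL True by auto
      have "n + 1 - (x + s - 1) \<in> {p\<in>P'. L < p \<and> p \<le> L + A - d}"
        by (rule refl_closed[OF Z Z_refl[OF XC] bnd xQ])
      then have x'P: "n + 1 - (x + s - 1) \<in> Pb s P'" by (auto simp: Pb_def)
      have w1: "n + 1 - (x + s - 1) \<le> n + 1 - y" using x by linarith
      have w2: "n + 1 - y \<le> n + 1 - (x + s - 1) + s - 1" using x xU nL s2 by linarith
      show ?thesis using x'P w1 w2 hy hy2 by metis
    next
      case False
      have hy3: "h y = y + d" using hv3 False by simp
      have xL: "L + A - d < x"
      proof (rule ccontr)
        assume "\<not> L + A - d < x"
        then have "x + s - 1 \<le> L + A - d" using nc(2) x unfolding nocut_def by auto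
        then show False using x False by linarith
      qed
      have "x + d \<in> Pb s P'" using x xL by (auto simp: Pb_def)
      moreover have "x + d \<le> y + d" "y + d \<le> x + d + s - 1" using x s2 by linarith+
      ultimately show ?thesis using hy hy3 by metis
    qed
  qed
qed

lemma ins:
  assumes XC: "X \<in> mcomponents a" and YC: "Y \<in> mcomponents a"
  shows "inside b (g ` Y) (g ` X) \<longleftrightarrow> inside a Y X"
proof -
  have inj: "inj_on tr.F (mcomponents a)" using tr.F_bij by (simp add: bij_betw_def)
  have neq: "g ` Y = g ` X \<longleftrightarrow> Y = X" using inj_onD[OF inj _ YC XC] by (auto simp: tr.F_def)
  have YY: "g ` Y \<in> mcomponents b" using gX_comp[OF YC] .
  have main: "is_cycle a X \<Longrightarrow> (\<exists>s P'. shp (g ` X) s P' \<and> 2 < s \<and> (\<exists>y\<in>g ` Y. \<exists>x\<in>P'. x \<le> y \<and> y \<le> x + s - 1))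
      \<longleftrightarrow> (\<exists>s P. shp X s P \<and> 2 < s \<and> (\<exists>y\<in>Y. \<exists>x\<in>P. x \<le> y \<and> y \<le> x + s - 1))"
  proof
    assume X: "is_cycle a X"
    assume "\<exists>s P'. shp (g ` X) s P' \<and> 2 < s \<and> (\<exists>y\<in>g ` Y. \<exists>x\<in>P'. x \<le> y \<and> y \<le> x + s - 1)"
    then obtain s P' y x where h: "shp (g ` X) s P'" "2 < s" "y \<in> g ` Y" "x \<in> P'" "x \<le> y" "y \<le> x + s - 1" by blast
    show "\<exists>s P. shp X s P \<and> 2 < s \<and> (\<exists>y\<in>Y. \<exists>x\<in>P. x \<le> y \<and> y \<le> x + s - 1)"
      using shpB[OF X h(1)] ins_bwd[OF XC YC X h] h(2) by blast
  next
    assume X: "is_cycle a X"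
    assume "\<exists>s P. shp X s P \<and> 2 < s \<and> (\<exists>y\<in>Y. \<exists>x\<in>P. x \<le> y \<and> y \<le> x + s - 1)"
    then obtain s P y x where h: "shp X s P" "2 < s" "y \<in> Y" "x \<in> P" "x \<le> y" "y \<le> x + s - 1" by blast
    show "\<exists>s P'. shp (g ` X) s P' \<and> 2 < s \<and> (\<exists>y\<in>g ` Y. \<exists>x\<in>P'. x \<le> y \<and> y \<le> x + s - 1)"
      using shpF[OF X h(1)] ins_fwd[OF XC YC X h] h(2) by blast
  qed
  show ?thesis unfolding inside_iff using cyc[OF XC] neq YY YC main by blast
qed

lemma step_equiv: "meander_equiv a b"
proof (rule equiv_crit[where F = tr.F])
  show "bij_betw tr.F (mcomponents a) (mcomponents b)" by (rule tr.F_bij)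
  fix X assume XC: "X \<in> mcomponents a"
  show "is_cycle b (tr.F X) \<longleftrightarrow> is_cycle a X" using cyc[OF XC] by (simp add: tr.F_def)
  fix Y assume YC: "Y \<in> mcomponents a"
  show "inside b (tr.F Y) (tr.F X) \<longleftrightarrow> inside a Y X" using ins[OF XC YC] by (simp add: tr.F_def)
next
  fix X s assume X: "is_cycle a X"
  show "(\<exists>xs. cycle_shape (tr.F X) s xs) \<longleftrightarrow> (\<exists>xs. cycle_shape X s xs)"
    unfolding shape_ex tr.F_def using shpF[OF X] shpB[OF X] by blast
qed

end

lemma th_rev: "1 \<le> x \<Longrightarrow> x \<le> sum_list a \<Longrightarrow> th (rev a) x = sum_list a + 1 - th a (sum_list a + 1 - x)"
proof (induction a arbitrary: x)
  case Nil then show ?case by simp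
next
  case (Cons c l)
  let ?S = "sum_list l"
  have sr: "sum_list (rev l) = ?S" by (simp add: sum_list_rev)
  show ?case
  proof (cases "x \<le> ?S")
    case True
    have "th (rev (c # l)) x = th (rev l) x" using True sr by (simp add: th_append)
    also have "\<dots> = ?S + 1 - th l (?S + 1 - x)" using Cons True by simp
    also have "\<dots> = sum_list (c # l) + 1 - th (c # l) (sum_list (c # l) + 1 - x)"
    proof -
      have e: "sum_list (c # l) + 1 - x - c = ?S + 1 - x" using True by simp
      have "\<not> sum_list (c # l) + 1 - x \<le> c" using True Cons.prems by simp
      moreover have "sum_list (c # l) + 1 - x \<noteq> 0" using Cons.prems by simp
      ultimately have "th (c # l) (sum_list (c # l) + 1 - x) = c + th l (?S + 1 - x)" using e by simp
      moreover have "th l (?S + 1 - x) \<le> ?S" using th_range[of "?S + 1 - x" l] True Cons.prems by simp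
      ultimately show ?thesis by simp
    qed
    finally show ?thesis .
  next
    case False
    have "th (rev (c # l)) x = ?S + th [c] (x - ?S)" using False sr by (simp add: th_append)
    also have "\<dots> = ?S + (c + 1 - (x - ?S))" using False Cons.prems by simp
    also have "\<dots> = sum_list (c # l) + 1 - th (c # l) (sum_list (c # l) + 1 - x)"
    proof -
      have "sum_list (c # l) + 1 - x \<le> c" "sum_list (c # l) + 1 - x \<noteq> 0" using False Cons.prems by auto
      then have "th (c # l) (sum_list (c # l) + 1 - x) = c + 1 - (sum_list (c # l) + 1 - x)" by simp
      then show ?thesis using False Cons.prems by simp
    qed
    finally show ?thesis .
  qed
qed

locale rfl =
  fixes a :: "nat list" and n :: nat
  assumes n: "n = sum_list a"
begin

definition phi where "phi x = n + 1 - x"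

lemma sr: "sum_list (rev a) = n" using n by (simp add: sum_list_rev)

lemma threv: "1 \<le> x \<Longrightarrow> x \<le> n \<Longrightarrow> th (rev a) x = n + 1 - th a (n + 1 - x)"
  using th_rev n by simp

lemma thr: "1 \<le> x \<Longrightarrow> x \<le> n \<Longrightarrow> 1 \<le> th a x \<and> th a x \<le> n"
  using th_range n by simp

lemma e_th: "x \<in> {1..sum_list b} \<Longrightarrow> y = th b x \<Longrightarrow> (x, y) \<in> (medges b)\<^sup>*"
  using edge_th by blast
lemma e_theta: "x \<in> {1..sum_list b} \<Longrightarrow> y = sum_list b + 1 - x \<Longrightarrow> (x, y) \<in> (medges b)\<^sup>*"
  using edge_theta by blast

sublocale rt: transfer a "rev a" phi phi
proof
  fix x assume x: "x \<in> {1..sum_list a}"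
  then have x1: "1 \<le> x" "x \<le> n" using n by auto
  have px: "phi x \<in> {1..sum_list (rev a)}" using x1 sr by (auto simp: phi_def)
  then show "phi x \<in> {1..sum_list (rev a)}" .
  have "th (rev a) (phi x) = phi (th a x)" using threv[of "phi x"] x1 by (simp add: phi_def)
  then show "(phi x, phi (th a x)) \<in> (medges (rev a))\<^sup>*" using e_th[OF px] by simp
  have "phi (n + 1 - x) = n + 1 - phi x" using x1 by (simp add: phi_def)
  then have "phi (sum_list a + 1 - x) = sum_list (rev a) + 1 - phi x" unfolding sr n[symmetric] .
  then show "(phi x, phi (sum_list a + 1 - x)) \<in> (medges (rev a))\<^sup>*" using e_theta[OF px] by simp
  show "(x, phi (phi x)) \<in> (medges a)\<^sup>*" using x1 by (simp add: phi_def)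
next
  fix y assume y: "y \<in> {1..sum_list (rev a)}"
  then have y1: "1 \<le> y" "y \<le> n" using sr by auto
  have "phi y \<in> {1..n}" using y1 by (auto simp: phi_def)
  then have py: "phi y \<in> {1..sum_list a}" unfolding n .
  then show "phi y \<in> {1..sum_list a}" .
  show "phi (phi y) = y" using y1 by (simp add: phi_def)
  have "th (rev a) y = n + 1 - th a (phi y)" using threv y1 by (simp add: phi_def)
  moreover have "th a (phi y) \<le> n" using thr[of "phi y"] y1 by (simp add: phi_def)
  ultimately have "phi (th (rev a) y) = th a (phi y)" by (simp add: phi_def)
  then show "(phi y, phi (th (rev a) y)) \<in> (medges a)\<^sup>*" using e_th[OF py] by simp
  have "phi (n + 1 - y) = n + 1 - phi y" using y1 by (simp add: phi_def)
  then have "phi (sum_list (rev a) + 1 - y) = sum_list a + 1 - phi y" unfolding sr n[symmetric] .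
  then show "(phi y, phi (sum_list (rev a) + 1 - y)) \<in> (medges a)\<^sup>*" using e_theta[OF py] by simp
qed

lemma Xr: "X \<in> mcomponents a \<Longrightarrow> x \<in> X \<Longrightarrow> 1 \<le> x \<and> x \<le> n"
  using comp_sub n by fastforce

lemma gX_comp: "X \<in> mcomponents a \<Longrightarrow> phi ` X \<in> mcomponents (rev a)"
  using rt.F_comp by (simp add: rt.F_def)

lemma cycR: "X \<in> mcomponents a \<Longrightarrow> is_cycle (rev a) (phi ` X) \<longleftrightarrow> is_cycle a X"
proof -
  assume XC: "X \<in> mcomponents a"
  have YC: "phi ` X \<in> mcomponents (rev a)" by (rule gX_comp[OF XC])
  have eq: "\<And>x. x \<in> X \<Longrightarrow> (phi x \<noteq> th (rev a) (phi x) \<and> phi x \<noteq> n + 1 - phi x) \<longleftrightarrow> (x \<noteq> th a x \<and> x \<noteq> n + 1 - x)"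
  proof -
    fix x assume "x \<in> X"
    then have x1: "1 \<le> x" "x \<le> n" using Xr[OF XC] by auto
    have t: "th (rev a) (phi x) = n + 1 - th a x" using threv[of "phi x"] x1 by (simp add: phi_def)
    have r: "1 \<le> th a x" "th a x \<le> n" using thr x1 by auto
    have q1: "(n + 1 - x = n + 1 - th a x) \<longleftrightarrow> (x = th a x)" using x1 r by arith
    have q2: "(n + 1 - x = n + 1 - (n + 1 - x)) \<longleftrightarrow> (x = n + 1 - x)" using x1 by arith
    show "(phi x \<noteq> th (rev a) (phi x) \<and> phi x \<noteq> n + 1 - phi x) \<longleftrightarrow> (x \<noteq> th a x \<and> x \<noteq> n + 1 - x)"
      unfolding t using q1 q2 by (simp add: phi_def)
  qed
  show ?thesis unfolding is_cycle_iff sr n[symmetric] using XC YC eq by auto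
qed

lemma phi_eq: "phi = (\<lambda>x. n + 1 - x)" by (rule ext) (simp add: phi_def)

lemma pp: "X \<in> mcomponents a \<Longrightarrow> phi ` phi ` X = X"
proof -
  assume XC: "X \<in> mcomponents a"
  have pp1: "\<And>x. x \<in> X \<Longrightarrow> phi (phi x) = x"
  proof -
    fix x assume "x \<in> X"
    then have "x \<le> n" using Xr[OF XC] by blast
    then show "phi (phi x) = x" by (simp add: phi_def)
  qed
  show ?thesis
  proof
    show "phi ` phi ` X \<subseteq> X" using pp1 by auto
    show "X \<subseteq> phi ` phi ` X"
    proof
      fix x assume "x \<in> X"
      then have "x = phi (phi x)" using pp1 by simp
      then show "x \<in> phi ` phi ` X" using \<open>x \<in> X\<close> by blast
    qed
  qed
qed

lemma shpR: "X \<in> mcomponents a \<Longrightarrow> (\<exists>P. shp (phi ` X) s P) \<longleftrightarrow> (\<exists>P. shp X s P)"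
proof -
  assume XC: "X \<in> mcomponents a"
  have b1: "\<forall>x\<in>X. x \<le> n + 1" using Xr[OF XC] by fastforce
  have b2: "\<forall>x\<in>phi ` X. x \<le> n + 1" by (auto simp: phi_def)
  show ?thesis
  proof
    assume "\<exists>P. shp (phi ` X) s P"
    then obtain P where "shp (phi ` X) s P" by blast
    from shp_refl[OF this b2] have "shp (phi ` phi ` X) s ((\<lambda>p. n + 1 - (p + s - 1)) ` P)"
      unfolding phi_eq .
    then show "\<exists>P. shp X s P" using pp[OF XC] by auto
  next
    assume "\<exists>P. shp X s P"
    then obtain P where "shp X s P" by blast
    from shp_refl[OF this b1] have "shp (phi ` X) s ((\<lambda>p. n + 1 - (p + s - 1)) ` P)"
      unfolding phi_eq .
    then show "\<exists>P. shp (phi ` X) s P" by blast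
  qed
qed

lemma wit:
  assumes "x + s - 1 \<le> n" "x \<le> y" "y \<le> x + s - 1" "1 < s"
  shows "n + 1 - (x + s - 1) \<le> n + 1 - y \<and> n + 1 - y \<le> n + 1 - (x + s - 1) + s - 1"
  using assms by linarith

lemma insR_fwd:
  assumes XC: "X \<in> mcomponents a" and YC: "Y \<in> mcomponents a"
    and P: "shp X s P" and y: "y \<in> Y" and x: "x \<in> P" "x \<le> y" "y \<le> x + s - 1"
  shows "shp (phi ` X) s ((\<lambda>p. n + 1 - (p + s - 1)) ` P) \<and> (\<exists>y'\<in>phi ` Y. \<exists>x'\<in>(\<lambda>p. n + 1 - (p + s - 1)) ` P. x' \<le> y' \<and> y' \<le> x' + s - 1)"
proof
  have b1: "\<forall>x\<in>X. x \<le> n + 1" using Xr[OF XC] by fastforce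
  from shp_refl[OF P b1] show "shp (phi ` X) s ((\<lambda>p. n + 1 - (p + s - 1)) ` P)" unfolding phi_eq .
  have "x + s - 1 \<in> X" using P x by (auto simp: shp_def)
  then have "x + s - 1 \<le> n" using Xr[OF XC] by blast
  moreover have "1 < s" using P by (simp add: shp_def)
  ultimately have w: "n + 1 - (x + s - 1) \<le> phi y \<and> phi y \<le> n + 1 - (x + s - 1) + s - 1"
    using wit x unfolding phi_def by blast
  moreover have "phi y \<in> phi ` Y" using y by blast
  moreover have "n + 1 - (x + s - 1) \<in> (\<lambda>p. n + 1 - (p + s - 1)) ` P" using x by blast
  ultimately show "\<exists>y'\<in>phi ` Y. \<exists>x'\<in>(\<lambda>p. n + 1 - (p + s - 1)) ` P. x' \<le> y' \<and> y' \<le> x' + s - 1" by blast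
qed

lemma insR_bwd:
  assumes XC: "X \<in> mcomponents a" and YC: "Y \<in> mcomponents a"
    and P: "shp (phi ` X) s Q" and y: "y \<in> phi ` Y" and x: "x \<in> Q" "x \<le> y" "y \<le> x + s - 1"
  shows "shp X s ((\<lambda>p. n + 1 - (p + s - 1)) ` Q) \<and> (\<exists>y'\<in>Y. \<exists>x'\<in>(\<lambda>p. n + 1 - (p + s - 1)) ` Q. x' \<le> y' \<and> y' \<le> x' + s - 1)"
proof
  have b2: "\<forall>x\<in>phi ` X. x \<le> n + 1" by (auto simp: phi_def)
  from shp_refl[OF P b2] show "shp X s ((\<lambda>p. n + 1 - (p + s - 1)) ` Q)" unfolding phi_eq[symmetric] pp[OF XC] .
  have "x + s - 1 \<in> phi ` X" using P x by (auto simp: shp_def)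
  then obtain z where z: "z \<in> X" "x + s - 1 = phi z" by blast
  then have "1 \<le> z" using Xr[OF XC] by blast
  then have "x + s - 1 \<le> n" using z by (simp add: phi_def)
  moreover have "1 < s" using P by (simp add: shp_def)
  ultimately have w: "n + 1 - (x + s - 1) \<le> phi y \<and> phi y \<le> n + 1 - (x + s - 1) + s - 1"
    using wit x unfolding phi_def by blast
  moreover have "phi y \<in> Y" using y pp[OF YC] by blast
  moreover have "n + 1 - (x + s - 1) \<in> (\<lambda>p. n + 1 - (p + s - 1)) ` Q" using x by blast
  ultimately show "\<exists>y'\<in>Y. \<exists>x'\<in>(\<lambda>p. n + 1 - (p + s - 1)) ` Q. x' \<le> y' \<and> y' \<le> x' + s - 1" by blast
qed

lemma insR:
  assumes XC: "X \<in> mcomponents a" and YC: "Y \<in> mcomponents a"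
  shows "inside (rev a) (phi ` Y) (phi ` X) \<longleftrightarrow> inside a Y X"
proof -
  have inj: "inj_on rt.F (mcomponents a)" using rt.F_bij by (simp add: bij_betw_def)
  have neq: "phi ` Y = phi ` X \<longleftrightarrow> Y = X" using inj_onD[OF inj _ YC XC] by (auto simp: rt.F_def)
  have YY: "phi ` Y \<in> mcomponents (rev a)" using gX_comp[OF YC] .
  have main: "(\<exists>s P'. shp (phi ` X) s P' \<and> 2 < s \<and> (\<exists>y\<in>phi ` Y. \<exists>x\<in>P'. x \<le> y \<and> y \<le> x + s - 1))
      \<longleftrightarrow> (\<exists>s P. shp X s P \<and> 2 < s \<and> (\<exists>y\<in>Y. \<exists>x\<in>P. x \<le> y \<and> y \<le> x + s - 1))"
  proof
    assume "\<exists>s P'. shp (phi ` X) s P' \<and> 2 < s \<and> (\<exists>y\<in>phi ` Y. \<exists>x\<in>P'. x \<le> y \<and> y \<le> x + s - 1)"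
    then obtain s P' y x where h: "shp (phi ` X) s P'" "2 < s" "y \<in> phi ` Y" "x \<in> P'" "x \<le> y" "y \<le> x + s - 1" by blast
    show "\<exists>s P. shp X s P \<and> 2 < s \<and> (\<exists>y\<in>Y. \<exists>x\<in>P. x \<le> y \<and> y \<le> x + s - 1)"
      using insR_bwd[OF XC YC h(1) h(3-6)] h(2) by blast
  next
    assume "\<exists>s P. shp X s P \<and> 2 < s \<and> (\<exists>y\<in>Y. \<exists>x\<in>P. x \<le> y \<and> y \<le> x + s - 1)"
    then obtain s P y x where h: "shp X s P" "2 < s" "y \<in> Y" "x \<in> P" "x \<le> y" "y \<le> x + s - 1" by blast
    show "\<exists>s P'. shp (phi ` X) s P' \<and> 2 < s \<and> (\<exists>y\<in>phi ` Y. \<exists>x\<in>P'. x \<le> y \<and> y \<le> x + s - 1)"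
      using insR_fwd[OF XC YC h(1) h(3-6)] h(2) by blast
  qed
  show ?thesis unfolding inside_iff using cycR[OF XC] neq YY YC main by blast
qed

lemma rev_equiv: "meander_equiv a (rev a)"
proof (rule equiv_crit[where F = rt.F])
  show "bij_betw rt.F (mcomponents a) (mcomponents (rev a))" by (rule rt.F_bij)
  fix X assume XC: "X \<in> mcomponents a"
  show "is_cycle (rev a) (rt.F X) \<longleftrightarrow> is_cycle a X" using cycR[OF XC] by (simp add: rt.F_def)
  fix Y assume YC: "Y \<in> mcomponents a"
  show "inside (rev a) (rt.F Y) (rt.F X) \<longleftrightarrow> inside a Y X" using insR[OF XC YC] by (simp add: rt.F_def)
next
  fix X s assume X: "is_cycle a X"
  then have XC: "X \<in> mcomponents a" by (simp add: is_cycle_iff)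
  show "(\<exists>xs. cycle_shape (rt.F X) s xs) \<longleftrightarrow> (\<exists>xs. cycle_shape X s xs)"
    unfolding shape_ex rt.F_def using shpR[OF XC] .
qed

end


lemma equiv_refl: "meander_equiv a a"
  unfolding meander_equiv_def by (rule exI[of _ id]) simp

lemma equiv_sym: "meander_equiv a b \<Longrightarrow> meander_equiv b a"
proof -
  assume "meander_equiv a b"
  then obtain f where f: "bij_betw f (mcomponents a) (mcomponents b)"
    "\<forall>X\<in>mcomponents a. max_dim b (f X) = max_dim a X" unfolding meander_equiv_def by blast
  let ?g = "inv_into (mcomponents a) f"
  have g: "bij_betw ?g (mcomponents b) (mcomponents a)" using bij_betw_inv_into[OF f(1)] .
  have "\<forall>Y\<in>mcomponents b. max_dim a (?g Y) = max_dim b Y"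
  proof
    fix Y assume Y: "Y \<in> mcomponents b"
    have "?g Y \<in> mcomponents a" using g Y by (auto simp: bij_betw_def)
    moreover have "f (?g Y) = Y" using f(1) Y by (simp add: bij_betw_inv_into_right)
    ultimately show "max_dim a (?g Y) = max_dim b Y" using f(2) by metis
  qed
  then show ?thesis unfolding meander_equiv_def using g by blast
qed

lemma equiv_trans: "meander_equiv a b \<Longrightarrow> meander_equiv b c \<Longrightarrow> meander_equiv a c"
proof -
  assume "meander_equiv a b" "meander_equiv b c"
  then obtain f g where f: "bij_betw f (mcomponents a) (mcomponents b)"
    "\<forall>X\<in>mcomponents a. max_dim b (f X) = max_dim a X"
    and g: "bij_betw g (mcomponents b) (mcomponents c)"
    "\<forall>X\<in>mcomponents b. max_dim c (g X) = max_dim b X" unfolding meander_equiv_def by blast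
  have "bij_betw (g \<circ> f) (mcomponents a) (mcomponents c)" using bij_betw_trans[OF f(1) g(1)] .
  moreover have "\<forall>X\<in>mcomponents a. max_dim c ((g \<circ> f) X) = max_dim a X"
  proof
    fix X assume X: "X \<in> mcomponents a"
    then have "f X \<in> mcomponents b" using f(1) by (auto simp: bij_betw_def)
    then show "max_dim c ((g \<circ> f) X) = max_dim a X" using f(2) g(2) X by simp
  qed
  ultimately show ?thesis unfolding meander_equiv_def by blast
qed

lemma equiv_same:
  assumes t: "th a = th c" and s: "sum_list a = sum_list c"
  shows "meander_equiv a c"
proof -
  have me: "medges a = medges c" unfolding medges_def theta_a_eq t s ..
  have mc: "mcomp a = mcomp c" by (rule ext) (simp add: mcomp_def me)
  have mcs: "mcomponents a = mcomponents c" by (simp add: mcomponents_def mc s)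
  have cy: "is_cycle a = is_cycle c" by (rule ext) (simp add: is_cycle_def mcs theta_a_eq t s)
  have ins: "inside a = inside c" by (intro ext) (simp add: inside_def cy mcs)
  have md: "max_dim a = max_dim c"
    by (rule ext) (simp add: max_dim_def is_maximal_cycle_def is_segment_def cy ins mcs)
  show ?thesis unfolding meander_equiv_def mcs md by (rule exI[of _ id]) simp
qed

lemma rev_equiv_g: "meander_equiv a (rev a)"
proof -
  interpret rfl a "sum_list a" by unfold_locales simp
  show ?thesis by (rule rev_equiv)
qed

lemma step_gt:
  assumes "sum_list l2 < sum_list l1" "sum_list l1 - sum_list l2 \<le> A"
  shows "meander_equiv (l1 @ A # l2) (l1 @ (A - (sum_list l1 - sum_list l2)) # l2)"
proof -
  interpret S: stp l1 l2 A "sum_list l1" "sum_list l2" "sum_list l1 - sum_list l2"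
    "sum_list l1 + A + sum_list l2" "sum_list l1 + (A - (sum_list l1 - sum_list l2)) + sum_list l2"
    using assms by unfold_locales auto
  show ?thesis using S.step_equiv unfolding S.a_def S.b_def .
qed

lemma step_gen:
  assumes ne: "sum_list l1 \<noteq> sum_list l2"
    and d: "d = (if sum_list l2 < sum_list l1 then sum_list l1 - sum_list l2 else sum_list l2 - sum_list l1)"
    and dA: "d \<le> A"
  shows "meander_equiv (l1 @ A # l2) (l1 @ (A - d) # l2)"
proof (cases "sum_list l2 < sum_list l1")
  case True
  then show ?thesis using step_gt[of l2 l1 A] d dA by simp
next
  case False
  then have lt: "sum_list (rev l1) < sum_list (rev l2)" using ne by (simp add: sum_list_rev)
  have d': "d = sum_list (rev l2) - sum_list (rev l1)" using d False by (simp add: sum_list_rev)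
  have e1: "meander_equiv (rev l2 @ A # rev l1) (rev l2 @ (A - d) # rev l1)"
    using step_gt[of "rev l1" "rev l2" A] lt d' dA by simp
  have e0: "meander_equiv (l1 @ A # l2) (rev l2 @ A # rev l1)"
    using rev_equiv_g[of "l1 @ A # l2"] by simp
  have e2: "meander_equiv (rev l2 @ (A - d) # rev l1) (l1 @ (A - d) # l2)"
    using equiv_sym[OF rev_equiv_g[of "l1 @ (A - d) # l2"]] by simp
  show ?thesis using equiv_trans[OF e0 equiv_trans[OF e1 e2]] .
qed

lemma mod_gen:
  assumes ne: "sum_list l1 \<noteq> sum_list l2"
    and d: "d = (if sum_list l2 < sum_list l1 then sum_list l1 - sum_list l2 else sum_list l2 - sum_list l1)"
  shows "meander_equiv (l1 @ A # l2) (l1 @ (A mod d) # l2)"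
proof (induction A rule: less_induct)
  case (less A)
  have d0: "0 < d" using ne d by auto
  show ?case
  proof (cases "A < d")
    case True then show ?thesis using equiv_refl by simp
  next
    case False
    then have dA: "d \<le> A" by simp
    have e1: "meander_equiv (l1 @ A # l2) (l1 @ (A - d) # l2)" by (rule step_gen[OF ne d dA])
    have e2: "meander_equiv (l1 @ (A - d) # l2) (l1 @ ((A - d) mod d) # l2)" using less d0 dA by simp
    have "(A - d) mod d = A mod d" using dA by (simp add: le_mod_geq)
    then show ?thesis using equiv_trans[OF e1 e2] by simp
  qed
qed

lemma sum_list_filter_nz: "sum_list (filter (\<lambda>x. x \<noteq> 0) (xs :: nat list)) = sum_list xs"
  by (induction xs) auto

theorem mainTheorem18:
  fixes a :: "nat list" and i :: nat
  assumes "is_composition a"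
    and "i < length a"
    and "dval a i \<noteq> 0"
  shows "meander_equiv a (reduce_comp a i)"
proof -
  define l1 where "l1 = take i a"
  define l2 where "l2 = drop (Suc i) a"
  define A where "A = a ! i"
  define d where "d = (if sum_list l2 < sum_list l1 then sum_list l1 - sum_list l2 else sum_list l2 - sum_list l1)"
  have a: "a = l1 @ A # l2" unfolding l1_def l2_def A_def using id_take_nth_drop[OF assms(2)] .
  have ne_d: "sum_list l1 \<noteq> sum_list l2 \<and> nat \<bar>dval a i\<bar> = d"
  proof (cases "i = length a - 1")
    case True
    then have "l2 = []" unfolding l2_def using assms(2) by simp
    moreover have "dval a i = - int (sum_list l1)" using True unfolding dval_def l1_def by simp
    ultimately show ?thesis using assms(3) unfolding d_def by auto
  next
    case False
    then have "dval a i = int (sum_list l1) - int (sum_list l2)" unfolding dval_def l1_def l2_def by simp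
    then show ?thesis using assms(3) unfolding d_def by auto
  qed
  have upd: "a[i := A mod d] = l1 @ (A mod d) # l2"
    unfolding l1_def l2_def using upd_conv_take_nth_drop[OF assms(2)] .
  have r: "reduce_comp a i = filter (\<lambda>x. x \<noteq> 0) (l1 @ (A mod d) # l2)"
    unfolding reduce_comp_def using ne_d upd A_def by simp
  have e1: "meander_equiv a (l1 @ (A mod d) # l2)" unfolding a[symmetric]
    using mod_gen[of l1 l2 d A] ne_d d_def a by simp
  have e2: "meander_equiv (l1 @ (A mod d) # l2) (reduce_comp a i)" unfolding r
    by (rule equiv_same) (rule th_filter[symmetric], rule sum_list_filter_nz[symmetric])
  show ?thesis by (rule equiv_trans[OF e1 e2])
qed


end
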